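(* For bivariate copulas $D_n$ ($n\in\mathbb{N}$) and $D$, consider: (i) $D_n\xrightarrow{\partial_2}D$; (ii) $\mathcal{T}(D_n)\xrightarrow{\partial_2}\mathcal{T}(D)$; (iii) $\mathcal{T}(D_n)\to\mathcal{T}(D)$ uniformly on $[0,1]^2$; (iv) $\mathcal{T}^2(D_n)\xrightarrow{\partial_2}\mathcal{T}^2(D)$; (v) $\mathcal{T}^2(D_n)\to\mathcal{T}^2(D)$ uniformly on $[0,1]^2$. Then (i) implies (ii), and (ii), (iii), (iv), (v) are equivalent.
   Context: $\Pi(u,v)=uv$; $\partial_2$ the partial derivative in the second argument; $D\vee E(u,v):=\int_0^1\min\{\partial_2D(u,t),\partial_2E(v,t)\}\,dt$; $\mathcal{T}(C):=C\vee\Pi$, $\mathcal{T}^2=\mathcal{T}\circ\mathcal{T}$. $D_n\xrightarrow{\partial_2}D$ means $\int_0^1|\partial_2D_n(u,t)-\partial_2D(u,t)|\,dt\to0$ for all $u\in[0,1]$. *)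

theory Defs
  imports "HOL-Analysis.Analysis"
begin

text \<open>Bivariate copulas, represented as functions real => real => real; only the
values on the unit square [0,1]^2 matter.\<close>
definition copula :: "(real \<Rightarrow> real \<Rightarrow> real) \<Rightarrow> bool" where
  "copula C \<longleftrightarrow>
     (\<forall>u\<in>{0..1}. C u 0 = 0 \<and> C 0 u = 0 \<and> C u 1 = u \<and> C 1 u = u) \<and>
     (\<forall>u1 u2 v1 v2. 0 \<le> u1 \<and> u1 \<le> u2 \<and> u2 \<le> 1 \<and> 0 \<le> v1 \<and> v1 \<le> v2 \<and> v2 \<le> 1 \<longrightarrow>
        0 \<le> C u2 v2 - C u1 v2 - C u2 v1 + C u1 v1)"

definition Pi_cop :: "real \<Rightarrow> real \<Rightarrow> real" where
  "Pi_cop u v = u * v"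

text \<open>Partial derivative in the second argument (set to 0 where it does not exist;
this only happens on a Lebesgue null set of t for copulas).\<close>
definition partial2 :: "(real \<Rightarrow> real \<Rightarrow> real) \<Rightarrow> real \<Rightarrow> real \<Rightarrow> real" where
  "partial2 D u t = (if (\<lambda>s. D u s) differentiable (at t) then deriv (\<lambda>s. D u s) t else 0)"

definition join_op :: "(real \<Rightarrow> real \<Rightarrow> real) \<Rightarrow> (real \<Rightarrow> real \<Rightarrow> real) \<Rightarrow> real \<Rightarrow> real \<Rightarrow> real" where
  "join_op D E u v = (LINT t:{0..1}|lebesgue. min (partial2 D u t) (partial2 E v t))"

definition T_op :: "(real \<Rightarrow> real \<Rightarrow> real) \<Rightarrow> real \<Rightarrow> real \<Rightarrow> real" where
  "T_op C = join_op C Pi_cop"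

definition partial2_conv :: "(nat \<Rightarrow> real \<Rightarrow> real \<Rightarrow> real) \<Rightarrow> (real \<Rightarrow> real \<Rightarrow> real) \<Rightarrow> bool" where
  "partial2_conv Ds D \<longleftrightarrow>
     (\<forall>u\<in>{0..1}. (\<lambda>n. LINT t:{0..1}|lebesgue. \<bar>partial2 (Ds n) u t - partial2 D u t\<bar>) \<longlonglongrightarrow> 0)"

definition unif_conv_sq :: "(nat \<Rightarrow> real \<Rightarrow> real \<Rightarrow> real) \<Rightarrow> (real \<Rightarrow> real \<Rightarrow> real) \<Rightarrow> bool" where
  "unif_conv_sq Ds D \<longleftrightarrow>
     uniform_limit ({0..1} \<times> {0..1}) (\<lambda>n (u, v). Ds n u v) (\<lambda>(u, v). D u v) sequentially"

end

theory Submission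
  imports Defs
begin

lemma vitali_fine_family:
  fixes E U :: "real set" and P :: "real \<Rightarrow> real \<Rightarrow> bool"
  assumes U: "open U" "E \<subseteq> U"
    and fine: "\<And>x d. x \<in> E \<Longrightarrow> d > 0 \<Longrightarrow> \<exists>a b. a \<le> x \<and> x \<le> b \<and> a < b \<and> b - a < d \<and> P a b"
  obtains C where "countable C"
    "\<And>i. i \<in> C \<Longrightarrow> 0 < snd i \<and> cball (fst i) (snd i) \<subseteq> U \<and> P (fst i - snd i) (fst i + snd i)"
    "disjoint_family_on (\<lambda>i. cball (fst i) (snd i)) C"
    "negligible (E - (\<Union>i\<in>C. cball (fst i) (snd i)))"
proof -
  define K where "K = {i. 0 < snd i \<and> cball (fst i) (snd i) \<subseteq> U \<and> P (fst i - snd i) (fst i + snd i)}"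
  have S: "\<exists>i. i \<in> K \<and> x \<in> cball (fst i) (snd i) \<and> snd i < d" if x: "x \<in> E" and d: "0 < d" for x d
  proof -
    obtain \<delta> where "\<delta> > 0" and \<delta>: "ball x \<delta> \<subseteq> U"
      using U x by (meson open_contains_ball subsetD)
    obtain a b where ab: "a \<le> x" "x \<le> b" "a < b" "b - a < min d \<delta>" "P a b"
      using fine[OF x, of "min d \<delta>"] \<open>\<delta> > 0\<close> d by auto
    let ?i = "((a+b)/2, (b-a)/2)"
    have cb: "cball (fst ?i) (snd ?i) = {a..b}"
      by (simp add: cball_eq_atLeastAtMost field_simps)
    have "{a..b} \<subseteq> ball x \<delta>"
      using ab by (auto simp: dist_real_def)
    then have "?i \<in> K"
      using ab \<delta> cb unfolding K_def by (auto simp: field_simps)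
    moreover have "x \<in> cball (fst ?i) (snd ?i)" using cb ab by auto
    moreover have "snd ?i < d" using ab by auto
    ultimately show ?thesis by blast
  qed
  obtain C where C: "countable C" "C \<subseteq> K"
     "pairwise (\<lambda>i j. disjnt (cball (fst i) (snd i)) (cball (fst j) (snd j))) C"
     "negligible(E - (\<Union>i \<in> C. cball (fst i) (snd i)))"
    by (rule Vitali_covering_theorem_cballs[of K snd E fst]) (use S K_def in auto)
  show thesis
  proof (rule that[OF C(1) _ _ C(4)])
    show "\<And>i. i \<in> C \<Longrightarrow> 0 < snd i \<and> cball (fst i) (snd i) \<subseteq> U \<and> P (fst i - snd i) (fst i + snd i)"
      using C(2) K_def by auto
    show "disjoint_family_on (\<lambda>i. cball (fst i) (snd i)) C"
      using C(3) unfolding disjoint_family_on_def pairwise_def disjnt_def by auto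
  qed
qed

lemma dini_null:
  fixes g :: "real \<Rightarrow> real" and E :: "real set"
  assumes mono: "mono g" and cont: "continuous_on UNIV g"
    and rs: "0 < r" "r < s"
    and E: "E \<in> lmeasurable"
    and A1: "\<And>x d. x \<in> E \<Longrightarrow> d > 0 \<Longrightarrow> \<exists>a b. a \<le> x \<and> x \<le> b \<and> a < b \<and> b - a < d \<and> g b - g a < r * (b - a)"
    and A2: "\<And>x d. x \<in> E \<Longrightarrow> d > 0 \<Longrightarrow> \<exists>a b. a \<le> x \<and> x \<le> b \<and> a < b \<and> b - a < d \<and> s * (b - a) < g b - g a"
  shows "measure lebesgue E = 0"
proof -
  define m where "m = measure lebesgue E"
  define \<mu> where "\<mu> = interval_measure g"
  define cb where "cb = (\<lambda>i::real\<times>real. cball (fst i) (snd i))"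
  have mono': "\<And>x y. x \<le> y \<Longrightarrow> g x \<le> g y" using mono by (simp add: mono_def)
  have mu_cb: "emeasure \<mu> (cb i) = ennreal (g (fst i + snd i) - g (fst i - snd i))" if "0 < snd i" for i
    unfolding \<mu>_def cb_def cball_eq_atLeastAtMost
    by (rule emeasure_interval_measure_Icc) (use that mono' cont in auto)
  have leb_cb: "emeasure lebesgue (cb i) = ennreal (2 * snd i)" if "0 < snd i" for i
    unfolding cb_def cball_eq_atLeastAtMost using that by simp
  have cb_borel: "cb i \<in> sets borel" for i unfolding cb_def by simp
  have cb_leb: "cb i \<in> sets lebesgue" for i unfolding cb_def by simp
  have key: "s * m \<le> r * (m + e)" if "e > 0" for e
  proof -
    obtain T where T: "open T" "E \<subseteq> T" "(T - E) \<in> lmeasurable" "emeasure lebesgue (T - E) < ennreal e"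
      using sets_lebesgue_outer_open[of E e] E \<open>e > 0\<close> by (auto simp: fmeasurable_def)
    have TE: "T = E \<union> (T - E)" using T by auto
    have Tl: "T \<in> lmeasurable" using E T(3) TE by (metis fmeasurable.Un)
    have "measure lebesgue (T - E) < e"
      using T(3,4) \<open>e > 0\<close> by (simp add: emeasure_eq_measure2 ennreal_less_iff)
    then have mT: "measure lebesgue T < m + e"
      using measure_Un_le[where A=E and B="T - E" and M=lebesgue] E T(3) TE m_def by (auto simp: fmeasurable_def) 
    obtain C1 where C1: "countable C1"
      "\<And>i. i \<in> C1 \<Longrightarrow> 0 < snd i \<and> cball (fst i) (snd i) \<subseteq> T \<and> g (fst i + snd i) - g (fst i - snd i) < r * ((fst i + snd i) - (fst i - snd i))"
      "disjoint_family_on (\<lambda>i. cball (fst i) (snd i)) C1"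
      "negligible (E - (\<Union>i\<in>C1. cball (fst i) (snd i)))"
      by (rule vitali_fine_family[OF T(1,2), of "\<lambda>a b. g b - g a < r * (b - a)"]) (use A1 in blast)+
    define W1 where "W1 = (\<Union>i\<in>C1. cb i)"
    have W1T: "W1 \<subseteq> T" using C1(2) unfolding W1_def cb_def by auto
    have W1b: "W1 \<in> sets borel" unfolding W1_def using C1(1) cb_borel by blast
    have W1l: "W1 \<in> sets lebesgue" unfolding W1_def using C1(1) cb_leb by blast
    have mu1: "emeasure \<mu> W1 = (\<integral>\<^sup>+ i. emeasure \<mu> (cb i) \<partial>count_space C1)"
      unfolding W1_def by (rule emeasure_UN_countable) (use C1 cb_borel \<mu>_def cb_def in auto)
    have leb1: "emeasure lebesgue W1 = (\<integral>\<^sup>+ i. emeasure lebesgue (cb i) \<partial>count_space C1)"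
      unfolding W1_def by (rule emeasure_UN_countable) (use C1 cb_leb cb_def in auto)
    have "emeasure \<mu> W1 \<le> (\<integral>\<^sup>+ i. ennreal r * emeasure lebesgue (cb i) \<partial>count_space C1)"
      unfolding mu1
    proof (rule nn_integral_mono)
      fix i assume "i \<in> space (count_space C1)"
      then have i: "i \<in> C1" by simp
      have "emeasure \<mu> (cb i) = ennreal (g (fst i + snd i) - g (fst i - snd i))"
        using mu_cb C1(2)[OF i] by auto
      also have "\<dots> \<le> ennreal (r * (2 * snd i))"
        using C1(2)[OF i] by (intro ennreal_leI) auto
      also have "\<dots> = ennreal r * emeasure lebesgue (cb i)"
        using leb_cb C1(2)[OF i] rs by (simp add: ennreal_mult)
      finally show "emeasure \<mu> (cb i) \<le> ennreal r * emeasure lebesgue (cb i)" .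
    qed
    also have "\<dots> = ennreal r * emeasure lebesgue W1"
      unfolding leb1 by (rule nn_integral_cmult) auto
    also have "\<dots> \<le> ennreal r * emeasure lebesgue T"
      by (intro mult_left_mono emeasure_mono W1T) (use Tl in auto)
    finally have muW1: "emeasure \<mu> W1 \<le> ennreal r * emeasure lebesgue T" .
    define V where "V = (\<Union>i\<in>C1. ball (fst i) (snd i))"
    have V: "open V" unfolding V_def by auto
    have VW1: "V \<subseteq> W1" unfolding V_def W1_def cb_def by auto
    define E' where "E' = E \<inter> V"
    have "negligible (\<Union>i\<in>C1. sphere (fst i) (snd i))"
      by (auto intro: negligible_sphere C1(1))
    then have negEE': "negligible (E - E')"
      using C1(4) unfolding E'_def V_def
      by (rule negligible_subset[OF negligible_Un]) (force simp: sphere_def ball_def cball_def le_less)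
    obtain C2 where C2: "countable C2"
      "\<And>i. i \<in> C2 \<Longrightarrow> 0 < snd i \<and> cball (fst i) (snd i) \<subseteq> V \<and> s * ((fst i + snd i) - (fst i - snd i)) < g (fst i + snd i) - g (fst i - snd i)"
      "disjoint_family_on (\<lambda>i. cball (fst i) (snd i)) C2"
      "negligible (E' - (\<Union>i\<in>C2. cball (fst i) (snd i)))"
      by (rule vitali_fine_family[OF V, of E' "\<lambda>a b. s * (b - a) < g b - g a"]) (use A2 E'_def in auto)
    define W2 where "W2 = (\<Union>i\<in>C2. cb i)"
    have W2V: "W2 \<subseteq> V" using C2(2) unfolding W2_def cb_def by auto
    have W2b: "W2 \<in> sets borel" unfolding W2_def using C2(1) cb_borel by blast
    have W2l: "W2 \<in> sets lebesgue" unfolding W2_def using C2(1) cb_leb by blast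
    have mu2: "emeasure \<mu> W2 = (\<integral>\<^sup>+ i. emeasure \<mu> (cb i) \<partial>count_space C2)"
      unfolding W2_def by (rule emeasure_UN_countable) (use C2 cb_borel \<mu>_def cb_def in auto)
    have leb2: "emeasure lebesgue W2 = (\<integral>\<^sup>+ i. emeasure lebesgue (cb i) \<partial>count_space C2)"
      unfolding W2_def by (rule emeasure_UN_countable) (use C2 cb_leb cb_def in auto)
    have "ennreal s * emeasure lebesgue W2 = (\<integral>\<^sup>+ i. ennreal s * emeasure lebesgue (cb i) \<partial>count_space C2)"
      unfolding leb2 by (rule nn_integral_cmult[symmetric]) auto
    also have "\<dots> \<le> emeasure \<mu> W2"
      unfolding mu2
    proof (rule nn_integral_mono)
      fix i assume "i \<in> space (count_space C2)"
      then have i: "i \<in> C2" by simp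
      have "ennreal s * emeasure lebesgue (cb i) = ennreal (s * (2 * snd i))"
        using leb_cb C2(2)[OF i] rs by (simp add: ennreal_mult)
      also have "\<dots> \<le> ennreal (g (fst i + snd i) - g (fst i - snd i))"
        using C2(2)[OF i] by (intro ennreal_leI) auto
      also have "\<dots> = emeasure \<mu> (cb i)"
        using mu_cb C2(2)[OF i] by auto
      finally show "ennreal s * emeasure lebesgue (cb i) \<le> emeasure \<mu> (cb i)" .
    qed
    also have "\<dots> \<le> emeasure \<mu> W1"
      by (rule emeasure_mono) (use W2V VW1 W1b \<mu>_def in auto)
    finally have sW2: "ennreal s * emeasure lebesgue W2 \<le> ennreal r * emeasure lebesgue T"
      using muW1 by simp
    have "negligible ((E - E') \<union> (E' - W2))"
      using negEE' C2(4) unfolding W2_def cb_def by (rule negligible_Un)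
    then have "(E - E') \<union> (E' - W2) \<in> null_sets lebesgue"
      by (simp add: negligible_iff_null_sets)
    moreover have "E \<subseteq> W2 \<union> ((E - E') \<union> (E' - W2))" by auto
    ultimately have "emeasure lebesgue E \<le> emeasure lebesgue W2"
      by (metis W2l emeasure_Un_null_set emeasure_mono sets.Un null_setsD2)
    then have "ennreal s * emeasure lebesgue E \<le> ennreal r * emeasure lebesgue T"
      using sW2 by (meson mult_left_mono order_trans zero_le)
    then have "ennreal (s * m) \<le> ennreal (r * measure lebesgue T)"
      using E Tl rs unfolding m_def by (simp add: emeasure_eq_measure2 ennreal_mult)
    then have "s * m \<le> r * measure lebesgue T"
      using rs by (subst (asm) ennreal_le_iff) auto
    also have "\<dots> \<le> r * (m + e)" using mT rs by auto
    finally show ?thesis .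
  qed
  have m0: "m \<ge> 0" unfolding m_def by simp
  show ?thesis
  proof (rule ccontr)
    assume "measure lebesgue E \<noteq> 0"
    then have "m > 0" using m0 unfolding m_def by linarith
    define e where "e = (s - r) * m / (2 * r)"
    have "e > 0" using \<open>m > 0\<close> rs unfolding e_def by auto
    from key[OF this] have "s * m \<le> r * m + r * e" by (simp add: algebra_simps)
    also have "r * e = (s - r) * m / 2" unfolding e_def using rs by (simp add: field_simps)
    finally show False using \<open>m > 0\<close> rs by (simp add: field_simps)
  qed
qed


lemma borel_dini_set:
  fixes Q :: "real \<Rightarrow> real \<Rightarrow> bool"
  assumes op: "\<And>h. open {x. Q x h}"
  shows "{x. \<forall>d>0. \<exists>h. 0 < h \<and> h < d \<and> Q x h} \<in> sets borel"
proof -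
  have eq: "{x. \<forall>d>0. \<exists>h. 0 < h \<and> h < d \<and> Q x h} = (\<Inter>n::nat. \<Union>h\<in>{0<..<inverse (Suc n)}. {x. Q x h})"
  proof (intro set_eqI iffI)
    fix x assume "x \<in> {x. \<forall>d>0. \<exists>h. 0 < h \<and> h < d \<and> Q x h}"
    then have x: "\<forall>d>0. \<exists>h. 0 < h \<and> h < d \<and> Q x h" by simp
    show "x \<in> (\<Inter>n::nat. \<Union>h\<in>{0<..<inverse (Suc n)}. {x. Q x h})"
    proof (intro InterI, clarsimp)
      fix n :: nat
      have "inverse (real (Suc n)) > 0" by simp
      then obtain h where "0 < h" "h < inverse (real (Suc n))" "Q x h" using x by blast
      then show "\<exists>h\<in>{0<..<inverse (1 + real n)}. Q x h" by auto
    qed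
  next
    fix x assume x: "x \<in> (\<Inter>n::nat. \<Union>h\<in>{0<..<inverse (Suc n)}. {x. Q x h})"
    show "x \<in> {x. \<forall>d>0. \<exists>h. 0 < h \<and> h < d \<and> Q x h}"
    proof (clarsimp)
      fix d :: real assume "d > 0"
      obtain n where n: "inverse (real (Suc n)) < d" using reals_Archimedean[OF \<open>d>0\<close>] by auto
      from x obtain h where "h \<in> {0<..<inverse (Suc n)}" "Q x h" by blast
      then show "\<exists>h>0. h < d \<and> Q x h" using n by (intro exI[of _ h]) auto
    qed
  qed
  show ?thesis unfolding eq
    by (rule sets.countable_INT'') (auto intro!: borel_open open_UN op)
qed

lemma mono_lipschitz_differentiable_ae:
  fixes g :: "real \<Rightarrow> real"
  assumes mono: "mono g" and lip: "\<And>x y. \<bar>g x - g y\<bar> \<le> \<bar>x - y\<bar>"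
  obtains N where "N \<in> null_sets lebesgue" "\<And>x. x \<notin> N \<Longrightarrow> g differentiable (at x)"
proof -
  have mono': "\<And>x y. x \<le> y \<Longrightarrow> g x \<le> g y" using mono by (simp add: mono_def)
  have cont: "continuous_on UNIV g"
    unfolding continuous_on_iff
  proof (intro ballI allI impI)
    fix x x' :: real and e :: real assume "e > 0"
    then show "\<exists>d>0. \<forall>x'\<in>UNIV. dist x' x < d \<longrightarrow> dist (g x') (g x) < e"
      using lip by (intro exI[of _ e]) (auto simp: dist_real_def intro: le_less_trans)
  qed
  have contf: "continuous_on UNIV (\<lambda>x. g (x + h))" "continuous_on UNIV (\<lambda>x. g (x - h))" for h
    by (auto intro!: continuous_on_compose2[OF cont] continuous_intros)
  define LS where "LS r = {x. \<forall>d>0. \<exists>h. 0 < h \<and> h < d \<and> g x - g (x - h) < r * h}" for r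
  define RS where "RS s = {x. \<forall>d>0. \<exists>h. 0 < h \<and> h < d \<and> s * h < g (x + h) - g x}" for s
  define LS' where "LS' s = {x. \<forall>d>0. \<exists>h. 0 < h \<and> h < d \<and> s * h < g x - g (x - h)}" for s
  define RS' where "RS' r = {x. \<forall>d>0. \<exists>h. 0 < h \<and> h < d \<and> g (x + h) - g x < r * h}" for r
  define B where "B k = {- real k .. real k}" for k :: nat
  have bor: "LS r \<in> sets borel" "RS r \<in> sets borel" "LS' r \<in> sets borel" "RS' r \<in> sets borel" for r
    unfolding LS_def RS_def LS'_def RS'_def
    by (intro borel_dini_set open_Collect_less continuous_intros cont contf)+
  have lmeas: "S \<in> sets borel \<Longrightarrow> S \<inter> B k \<in> lmeasurable" for S k
    unfolding B_def by (intro bounded_set_imp_lmeasurable) (auto intro: bounded_subset[of "{- real k .. real k}"])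
  have null_of: "S \<in> lmeasurable \<Longrightarrow> measure lebesgue S = 0 \<Longrightarrow> S \<in> null_sets lebesgue" for S
    by (simp add: null_sets_def emeasure_eq_measure2 fmeasurableD)
  have N1: "LS r \<inter> RS s \<inter> B k \<in> null_sets lebesgue" if "0 < r" "r < s" for r s k
  proof (rule null_of)
    show L: "LS r \<inter> RS s \<inter> B k \<in> lmeasurable" using lmeas bor by (simp add: sets.Int)
    show "measure lebesgue (LS r \<inter> RS s \<inter> B k) = 0"
    proof (rule dini_null[OF mono cont that L])
      fix x d assume x: "x \<in> LS r \<inter> RS s \<inter> B k" and d: "(d::real) > 0"
      then obtain h where "0 < h" "h < d" "g x - g (x - h) < r * h" unfolding LS_def by blast
      then show "\<exists>a b. a \<le> x \<and> x \<le> b \<and> a < b \<and> b - a < d \<and> g b - g a < r * (b - a)"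
        by (intro exI[of _ "x - h"] exI[of _ x]) auto
    next
      fix x d assume x: "x \<in> LS r \<inter> RS s \<inter> B k" and d: "(d::real) > 0"
      then obtain h where "0 < h" "h < d" "s * h < g (x + h) - g x" unfolding RS_def by blast
      then show "\<exists>a b. a \<le> x \<and> x \<le> b \<and> a < b \<and> b - a < d \<and> s * (b - a) < g b - g a"
        by (intro exI[of _ x] exI[of _ "x + h"]) auto
    qed
  qed
  have N2: "LS' s \<inter> RS' r \<inter> B k \<in> null_sets lebesgue" if "0 < r" "r < s" for r s k
  proof (rule null_of)
    show L: "LS' s \<inter> RS' r \<inter> B k \<in> lmeasurable" using lmeas bor by (simp add: sets.Int)
    show "measure lebesgue (LS' s \<inter> RS' r \<inter> B k) = 0"
    proof (rule dini_null[OF mono cont that L])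
      fix x d assume x: "x \<in> LS' s \<inter> RS' r \<inter> B k" and d: "(d::real) > 0"
      then obtain h where "0 < h" "h < d" "g (x + h) - g x < r * h" unfolding RS'_def by blast
      then show "\<exists>a b. a \<le> x \<and> x \<le> b \<and> a < b \<and> b - a < d \<and> g b - g a < r * (b - a)"
        by (intro exI[of _ x] exI[of _ "x + h"]) auto
    next
      fix x d assume x: "x \<in> LS' s \<inter> RS' r \<inter> B k" and d: "(d::real) > 0"
      then obtain h where "0 < h" "h < d" "s * h < g x - g (x - h)" unfolding LS'_def by blast
      then show "\<exists>a b. a \<le> x \<and> x \<le> b \<and> a < b \<and> b - a < d \<and> s * (b - a) < g b - g a"
        by (intro exI[of _ "x - h"] exI[of _ x]) auto
    qed
  qed
  define I :: "((real \<times> real) \<times> nat) set" where "I = ((\<rat> \<times> \<rat>) \<times> (UNIV :: nat set))"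
  define NS where "NS i = (case i of ((r, s), k) \<Rightarrow>
      if 0 < r \<and> r < s then (LS r \<inter> RS s \<inter> B k) \<union> (LS' s \<inter> RS' r \<inter> B k) else {})" for i
  define N where "N = (\<Union>i\<in>I. NS i)"
  have "countable I" unfolding I_def by (intro countable_SIGMA countable_rat) auto
  then have Nnull: "N \<in> null_sets lebesgue"
    unfolding N_def by (rule null_sets_UN') (auto simp: NS_def intro!: null_sets.Un N1 N2)
  have inB: "x \<in> B (nat \<lceil>\<bar>x\<bar>\<rceil>)" for x
    unfolding B_def by (auto; linarith)
  have diff: "g differentiable (at x)" if xN: "x \<notin> N" for x
  proof -
    define q where "q h = (g (x + h) - g x) / h" for h
    have q01: "0 \<le> q h \<and> q h \<le> 1" if "h \<noteq> 0" for h
    proof (cases "h > 0")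
      case True
      have "0 \<le> g (x + h) - g x" "g (x + h) - g x \<le> h"
        using mono'[of x "x + h"] lip[of "x + h" x] True by auto
      then show ?thesis using True unfolding q_def by (auto simp: field_simps)
    next
      case False
      then have "h < 0" using that by auto
      have "g (x + h) - g x \<le> 0" "h \<le> g (x + h) - g x"
        using mono'[of "x + h" x] lip[of "x + h" x] \<open>h < 0\<close> by auto
      then show ?thesis using \<open>h < 0\<close> unfolding q_def by (auto simp: field_simps)
    qed
    define Q where "Q h = ereal (q h)" for h
    let ?R = "at_right (0::real)" and ?L = "at_left (0::real)"
    have evR: "\<forall>\<^sub>F h in ?R. 0 \<le> Q h \<and> Q h \<le> 1"
      unfolding eventually_at_right_field Q_def using q01 by (intro exI[of _ 1]) auto
    have evL: "\<forall>\<^sub>F h in ?L. 0 \<le> Q h \<and> Q h \<le> 1"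
      unfolding eventually_at_left_field Q_def using q01 by (intro exI[of _ "-1"]) auto
    have ntR: "?R \<noteq> bot" and ntL: "?L \<noteq> bot" by auto
    have loR: "0 \<le> Liminf ?R Q" by (rule Liminf_bounded) (use evR in \<open>auto elim: eventually_mono\<close>)
    have loL: "0 \<le> Liminf ?L Q" by (rule Liminf_bounded) (use evL in \<open>auto elim: eventually_mono\<close>)
    have hiR: "Limsup ?R Q \<le> 1" by (rule Limsup_bounded) (use evR in \<open>auto elim: eventually_mono\<close>)
    have hiL: "Limsup ?L Q \<le> 1" by (rule Limsup_bounded) (use evL in \<open>auto elim: eventually_mono\<close>)
    have rs_between: "\<exists>r s. r \<in> \<rat> \<and> s \<in> \<rat> \<and> 0 < r \<and> r < s \<and> b < ereal r \<and> ereal s < a"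
      if hyp: "b < a" "0 \<le> b" "a \<le> 1" for a b :: ereal
    proof -
      obtain a' b' where ab: "a = ereal a'" "b = ereal b'" using hyp
        by (cases a; cases b) auto
      obtain r where r: "r \<in> \<rat>" "b' < r" "r < a'" using Rats_dense_in_real[of b' a'] hyp ab by auto
      obtain s where s: "s \<in> \<rat>" "r < s" "s < a'" using Rats_dense_in_real[of r a'] r by auto
      show ?thesis using r s ab hyp by (intro exI[of _ r] exI[of _ s]) auto
    qed
    have claimA: "Limsup ?R Q \<le> Liminf ?L Q"
    proof (rule ccontr)
      assume "\<not> ?thesis"
      then have lt: "Liminf ?L Q < Limsup ?R Q" by simp
      obtain r s where rs: "r \<in> \<rat>" "s \<in> \<rat>" "0 < r" "r < s" "Liminf ?L Q < ereal r" "ereal s < Limsup ?R Q"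
        using rs_between[OF lt loL hiR] by blast
      have "x \<in> LS r"
        unfolding LS_def
      proof (clarsimp, rule ccontr)
        fix d :: real assume "d > 0" and nh: "\<not> (\<exists>h>0. h < d \<and> g x - g (x - h) < r * h)"
        have "\<forall>\<^sub>F h in ?L. ereal r \<le> Q h"
          unfolding eventually_at_left_field
        proof (intro exI[of _ "-d"] conjI allI impI)
          fix y assume y: "- d < y" "y < 0"
          have "-y > 0" "-y < d" using y by auto
          then have "\<not> (g x - g (x - (- y)) < r * (- y))" using nh by blast
          then have "r * (- y) \<le> g x - g (x - (- y))" by linarith
          then show "ereal r \<le> Q y" using y unfolding Q_def q_def by (simp add: neg_le_divide_eq algebra_simps)
        qed (use \<open>d > 0\<close> in auto)
        then have "ereal r \<le> Liminf ?L Q" by (rule Liminf_bounded)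
        then show False using rs by simp
      qed
      moreover have "x \<in> RS s"
        unfolding RS_def
      proof (clarsimp, rule ccontr)
        fix d :: real assume "d > 0" and nh: "\<not> (\<exists>h>0. h < d \<and> s * h < g (x + h) - g x)"
        have "\<forall>\<^sub>F h in ?R. Q h \<le> ereal s"
          unfolding eventually_at_right_field
        proof (intro exI[of _ "d"] conjI allI impI)
          fix y assume y: "0 < y" "y < d"
          then have "\<not> (s * y < g (x + y) - g x)" using nh by blast
          then have "g (x + y) - g x \<le> s * y" by linarith
          then show "Q y \<le> ereal s" using y unfolding Q_def q_def by (simp add: divide_le_eq algebra_simps)
        qed (use \<open>d > 0\<close> in auto)
        then have "Limsup ?R Q \<le> ereal s" by (rule Limsup_bounded)
        then show False using rs by simp
      qed
      ultimately have "x \<in> NS ((r, s), nat \<lceil>\<bar>x\<bar>\<rceil>)" using rs inB unfolding NS_def by auto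
      moreover have "((r, s), nat \<lceil>\<bar>x\<bar>\<rceil>) \<in> I" using rs unfolding I_def by auto
      ultimately show False using xN unfolding N_def by blast
    qed
    have claimB: "Limsup ?L Q \<le> Liminf ?R Q"
    proof (rule ccontr)
      assume "\<not> ?thesis"
      then have lt: "Liminf ?R Q < Limsup ?L Q" by simp
      obtain r s where rs: "r \<in> \<rat>" "s \<in> \<rat>" "0 < r" "r < s" "Liminf ?R Q < ereal r" "ereal s < Limsup ?L Q"
        using rs_between[OF lt loR hiL] by blast
      have "x \<in> RS' r"
        unfolding RS'_def
      proof (clarsimp, rule ccontr)
        fix d :: real assume "d > 0" and nh: "\<not> (\<exists>h>0. h < d \<and> g (x + h) - g x < r * h)"
        have "\<forall>\<^sub>F h in ?R. ereal r \<le> Q h"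
          unfolding eventually_at_right_field
        proof (intro exI[of _ "d"] conjI allI impI)
          fix y assume y: "0 < y" "y < d"
          then have "\<not> (g (x + y) - g x < r * y)" using nh by blast
          then have "r * y \<le> g (x + y) - g x" by linarith
          then show "ereal r \<le> Q y" using y unfolding Q_def q_def by (simp add: le_divide_eq algebra_simps)
        qed (use \<open>d > 0\<close> in auto)
        then have "ereal r \<le> Liminf ?R Q" by (rule Liminf_bounded)
        then show False using rs by simp
      qed
      moreover have "x \<in> LS' s"
        unfolding LS'_def
      proof (clarsimp, rule ccontr)
        fix d :: real assume "d > 0" and nh: "\<not> (\<exists>h>0. h < d \<and> s * h < g x - g (x - h))"
        have "\<forall>\<^sub>F h in ?L. Q h \<le> ereal s"
          unfolding eventually_at_left_field
        proof (intro exI[of _ "-d"] conjI allI impI)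
          fix y assume y: "- d < y" "y < 0"
          have "-y > 0" "-y < d" using y by auto
          then have "\<not> (s * (- y) < g x - g (x - (- y)))" using nh by blast
          then have "g x - g (x - (- y)) \<le> s * (- y)" by linarith
          then show "Q y \<le> ereal s" using y unfolding Q_def q_def by (simp add: neg_divide_le_eq algebra_simps)
        qed (use \<open>d > 0\<close> in auto)
        then have "Limsup ?L Q \<le> ereal s" by (rule Limsup_bounded)
        then show False using rs by simp
      qed
      ultimately have "x \<in> NS ((r, s), nat \<lceil>\<bar>x\<bar>\<rceil>)" using rs inB unfolding NS_def by auto
      moreover have "((r, s), nat \<lceil>\<bar>x\<bar>\<rceil>) \<in> I" using rs unfolding I_def by auto
      ultimately show False using xN unfolding N_def by blast
    qed
    have c1: "Liminf ?R Q \<le> Limsup ?R Q" and c2: "Liminf ?L Q \<le> Limsup ?L Q"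
      by (auto intro!: Liminf_le_Limsup)
    define l where "l = Limsup ?R Q"
    have eqs: "Liminf ?R Q = l" "Limsup ?L Q = l" "Liminf ?L Q = l"
      using claimA claimB c1 c2 unfolding l_def by (auto intro: order.antisym order.trans)
    have tR: "(Q \<longlongrightarrow> l) ?R" by (rule Liminf_eq_Limsup) (use eqs l_def in auto)
    have tL: "(Q \<longlongrightarrow> l) ?L" by (rule Liminf_eq_Limsup) (use eqs in auto)
    have "0 \<le> l" "l \<le> 1" using loR c1 hiR eqs l_def by auto
    then obtain l' where l': "l = ereal l'" by (cases l) auto
    have "(q \<longlongrightarrow> l') ?R" "(q \<longlongrightarrow> l') ?L"
      using tR tL unfolding l' Q_def lim_ereal by auto
    then have "(q \<longlongrightarrow> l') (at 0)" by (rule filterlim_split_at_real[rotated])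
    then have "(g has_field_derivative l') (at x)"
      unfolding DERIV_def q_def by simp
    then show ?thesis unfolding real_differentiable_def by blast
  qed
  show thesis using that Nnull diff by blast
qed

abbreviation M01 :: "real measure" where "M01 \<equiv> lebesgue_on {0..1}"

definition Phi :: "(real \<Rightarrow> real) \<Rightarrow> real \<Rightarrow> real" where
  "Phi X v = integral\<^sup>L M01 (\<lambda>s. min (X s) v)"

definition Gf :: "(real \<Rightarrow> real) \<Rightarrow> real \<Rightarrow> real" where
  "Gf X t = measure M01 {s \<in> {0..1}. t < X s}"

definition good :: "(real \<Rightarrow> real) \<Rightarrow> bool" where
  "good X \<longleftrightarrow> X \<in> borel_measurable M01 \<and> (\<forall>s\<in>{0<..<1}. 0 \<le> X s \<and> X s \<le> 1)"

lemma space_M01[simp]: "space M01 = {0..1}" by simp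

lemma sets_M01: "A \<in> sets M01 \<longleftrightarrow> A \<subseteq> {0..1} \<and> A \<in> sets lebesgue"
  by (simp add: sets_restrict_space_iff)

lemma finite_M01: "finite_measure M01"
  by (rule finite_measure_lebesgue_on) simp

lemma emeasure_M01: "A \<subseteq> {0..1} \<Longrightarrow> A \<in> sets lebesgue \<Longrightarrow> emeasure M01 A = emeasure lebesgue A"
  by (simp add: emeasure_restrict_space)

lemma measure_M01: "A \<subseteq> {0..1} \<Longrightarrow> A \<in> sets lebesgue \<Longrightarrow> measure M01 A = measure lebesgue A"
  by (simp add: measure_restrict_space)

lemma id_M01[measurable]: "(\<lambda>x. x) \<in> borel_measurable M01"
  by (intro measurable_restrict_space1) (simp add: measurable_completion)

lemma borel_M01: "f \<in> borel_measurable borel \<Longrightarrow> f \<in> borel_measurable M01"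
  using measurable_compose[OF id_M01] by auto

lemma AE_M01_interior: "AE s in M01. 0 < s \<and> s < 1"
proof -
  have "{0, 1::real} \<in> null_sets M01"
    by (subst null_sets_restrict_space) (auto intro: countable_imp_null_set_lborel null_sets_completionI)
  then show ?thesis
    by (rule AE_I'[where N="{0,1}"]) auto
qed

lemma countable_AE_M01: "countable C \<Longrightarrow> AE s in M01. s \<notin> C"
proof -
  assume "countable C"
  then have "C \<inter> {0..1} \<in> null_sets M01"
    by (subst null_sets_restrict_space) (auto intro: countable_imp_null_set_lborel null_sets_completionI countable_Int1)
  then show ?thesis
    by (rule AE_I'[where N="C \<inter> {0..1}"]) auto
qed

lemma LINT_M01: "(LINT t:{0..1}|lebesgue. f t) = integral\<^sup>L M01 (f :: real \<Rightarrow> real)"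
  unfolding set_lebesgue_integral_def by (subst integral_restrict_space) auto

lemma good_AE: "good X \<Longrightarrow> AE s in M01. 0 \<le> X s \<and> X s \<le> 1"
  using AE_M01_interior unfolding good_def by eventually_elim auto

lemma integrable_M01_bound:
  fixes f :: "real \<Rightarrow> real"
  assumes "f \<in> borel_measurable M01" "AE s in M01. \<bar>f s\<bar> \<le> B"
  shows "integrable M01 f"
  using finite_measure.integrable_const_bound[OF finite_M01, of f B] assms by auto

lemma Gf_sets: "(X :: real \<Rightarrow> real) \<in> borel_measurable M01 \<Longrightarrow> {s \<in> {0..1}. t < X s} \<in> sets M01"
proof -
  assume X: "X \<in> borel_measurable M01"
  have "{s \<in> space M01. t < X s} \<in> sets M01" using X borel_measurable_iff_greater by blast
  then show ?thesis by simp
qed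

lemma Gf_bounds: "0 \<le> Gf X t \<and> Gf X t \<le> 1"
proof -
  have "measure M01 {s \<in> {0..1}. t < X s} \<le> measure M01 {0..1}"
  proof (cases "{s \<in> {0..1}. t < X s} \<in> sets M01")
    case True then show ?thesis
      by (intro finite_measure.finite_measure_mono[OF finite_M01]) auto
  next
    case False then show ?thesis by (simp add: measure_notin_sets)
  qed
  also have "\<dots> = 1" by (subst measure_M01) auto
  finally show ?thesis unfolding Gf_def by simp
qed

lemma Gf_antimono: "X \<in> borel_measurable M01 \<Longrightarrow> t \<le> t' \<Longrightarrow> Gf X t' \<le> Gf X t"
  unfolding Gf_def
  by (intro finite_measure.finite_measure_mono[OF finite_M01] Gf_sets) auto

lemma antimono_borel: 
  fixes f :: "real \<Rightarrow> real"
  assumes "\<And>x y. x \<le> y \<Longrightarrow> f y \<le> f x" shows "f \<in> borel_measurable borel"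
proof -
  have "mono (\<lambda>x. - f x)" using assms by (auto simp: mono_def)
  then have "(\<lambda>x. - (- f x)) \<in> borel_measurable borel"
    using borel_measurable_mono borel_measurable_uminus by blast
  then show ?thesis by simp
qed

lemma antimono_ctble_discont:
  fixes f :: "real \<Rightarrow> real"
  assumes "\<And>x y. x \<le> y \<Longrightarrow> f y \<le> f x" shows "countable {a. \<not> isCont f a}"
proof -
  have "mono (\<lambda>x. - f x)" using assms by (auto simp: mono_def)
  have "{a. \<not> isCont f a} \<subseteq> {a. \<not> isCont (\<lambda>x. - f x) a}"
  proof safe
    fix a assume "\<not> isCont f a" "isCont (\<lambda>x. - f x) a"
    then show False using isCont_minus[of a "\<lambda>x. - f x"] by simp
  qed
  from countable_subset[OF this mono_ctble_discont[OF \<open>mono (\<lambda>x. - f x)\<close>]] show ?thesis .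
qed

lemma Gf_borel: "X \<in> borel_measurable M01 \<Longrightarrow> Gf X \<in> borel_measurable borel"
  by (rule antimono_borel) (rule Gf_antimono)

lemma good_Gf: "X \<in> borel_measurable M01 \<Longrightarrow> good (Gf X)"
  unfolding good_def using Gf_borel borel_M01 Gf_bounds by blast


lemma borel_lebesgue: "f \<in> borel_measurable borel \<Longrightarrow> f \<in> borel_measurable lebesgue"
proof -
  assume "f \<in> borel_measurable borel"
  then have "f \<in> borel_measurable lborel" by (simp add: measurable_cong_sets[OF sets_lborel refl])
  then show ?thesis by (rule measurable_completion)
qed

lemma Gf_integral: "Gf X t = integral\<^sup>L M01 (indicator {s. t < X s})"
  unfolding Gf_def integral_indicator by (simp add: Int_def conj_commute)

lemma good_meas: "good X \<Longrightarrow> X \<in> borel_measurable M01" unfolding good_def by simp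

lemma Phi_integrable: "good X \<Longrightarrow> integrable M01 (\<lambda>s. min (X s) v)"
proof -
  assume X: "good X"
  show ?thesis
  proof (rule integrable_M01_bound[where B="max 1 \<bar>v\<bar>"])
    show "(\<lambda>s. min (X s) v) \<in> borel_measurable M01" using good_meas[OF X] by measurable
    show "AE s in M01. \<bar>min (X s) v\<bar> \<le> max 1 \<bar>v\<bar>"
      using good_AE[OF X] by eventually_elim auto
  qed
qed

lemma indicator_integrable: "X \<in> borel_measurable M01 \<Longrightarrow> integrable M01 (indicator {s. t < (X s :: real)} :: real \<Rightarrow> real)"
proof -
  assume X: "X \<in> borel_measurable M01"
  have "{s \<in> space M01. t < X s} \<in> sets M01" using X borel_measurable_iff_greater by blast
  then have "(indicator {s \<in> space M01. t < X s} :: real \<Rightarrow> real) \<in> borel_measurable M01"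
    by (rule borel_measurable_indicator)
  moreover have "(indicator {s \<in> space M01. t < X s} :: real \<Rightarrow> real) = (\<lambda>s. if s \<in> space M01 then indicator {s. t < X s} s else 0)"
    by (auto simp: indicator_def)
  ultimately have "(indicator {s. t < X s} :: real \<Rightarrow> real) \<in> borel_measurable M01"
    by (metis (no_types, lifting) measurable_cong)
  then show ?thesis
    by (rule integrable_M01_bound[where B=1]) (auto simp: indicator_def)
qed

lemma Phi_diff_bounds:
  assumes X: "good X" and ab: "a \<le> b"
  shows "(b - a) * Gf X b \<le> Phi X b - Phi X a \<and> Phi X b - Phi X a \<le> (b - a) * Gf X a"
proof -
  have eq: "Phi X b - Phi X a = integral\<^sup>L M01 (\<lambda>s. min (X s) b - min (X s) a)"
    unfolding Phi_def by (subst Bochner_Integration.integral_diff) (auto intro: Phi_integrable X)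
  have iX: "integrable M01 (indicator {s. t < X s} :: real \<Rightarrow> real)" for t
    by (rule indicator_integrable[OF good_meas[OF X]])
  have "(b - a) * Gf X b = integral\<^sup>L M01 (\<lambda>s. (b - a) * indicator {s. b < X s} s)"
    unfolding Gf_integral by simp
  also have "\<dots> \<le> integral\<^sup>L M01 (\<lambda>s. min (X s) b - min (X s) a)"
  proof (rule integral_mono)
    show "integrable M01 (\<lambda>s. (b - a) * indicator {s. b < X s} s)" by (intro integrable_mult_right iX)
    show "integrable M01 (\<lambda>s. min (X s) b - min (X s) a)" by (intro Bochner_Integration.integrable_diff Phi_integrable X)
  qed (use ab in \<open>auto simp: indicator_def\<close>)
  finally have 1: "(b - a) * Gf X b \<le> Phi X b - Phi X a" using eq by simp
  have "integral\<^sup>L M01 (\<lambda>s. min (X s) b - min (X s) a) \<le> integral\<^sup>L M01 (\<lambda>s. (b - a) * indicator {s. a < X s} s)"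
  proof (rule integral_mono)
    show "integrable M01 (\<lambda>s. (b - a) * indicator {s. a < X s} s)" by (intro integrable_mult_right iX)
    show "integrable M01 (\<lambda>s. min (X s) b - min (X s) a)" by (intro Bochner_Integration.integrable_diff Phi_integrable X)
  qed (use ab in \<open>auto simp: indicator_def\<close>)
  also have "\<dots> = (b - a) * Gf X a"
    unfolding Gf_integral by simp
  finally show ?thesis using 1 eq by simp
qed

lemma Phi_quot:
  assumes X: "good X" and h: "h \<noteq> 0"
  shows "min (Gf X t) (Gf X (t + h)) \<le> (Phi X (t + h) - Phi X t) / h \<and> (Phi X (t + h) - Phi X t) / h \<le> max (Gf X t) (Gf X (t + h))"
    (is "?a \<le> ?q \<and> ?q \<le> ?b")
proof (cases "h > 0")
  case True
  from Phi_diff_bounds[OF X, of t "t + h"] True have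
    "h * Gf X (t + h) \<le> Phi X (t + h) - Phi X t" "Phi X (t + h) - Phi X t \<le> h * Gf X t" by auto
  then have "Gf X (t + h) \<le> ?q" "?q \<le> Gf X t" using True by (auto simp: field_simps)
  then show ?thesis by auto
next
  case False
  then have hn: "h < 0" using h by auto
  from Phi_diff_bounds[OF X, of "t + h" t] hn have
    "(- h) * Gf X t \<le> Phi X t - Phi X (t + h)" "Phi X t - Phi X (t + h) \<le> (- h) * Gf X (t + h)" by auto
  then have "Gf X t \<le> ?q" "?q \<le> Gf X (t + h)" using hn by (auto simp: field_simps)
  then show ?thesis by auto
qed

lemma Phi_quot01:
  assumes X: "good X" and h: "h \<noteq> 0"
  shows "0 \<le> (Phi X (t + h) - Phi X t) / h \<and> (Phi X (t + h) - Phi X t) / h \<le> 1"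
  using Phi_quot[OF X h, of t] Gf_bounds[of X t] Gf_bounds[of X "t + h"] by linarith

lemma Phi_deriv:
  assumes X: "good X" and c: "isCont (Gf X) t"
  shows "(Phi X has_real_derivative Gf X t) (at t)"
  unfolding DERIV_def LIM_eq
proof (intro allI impI)
  fix r :: real assume "r > 0"
  from c obtain d where d: "d > 0" "\<And>x. x \<noteq> t \<and> norm (x - t) < d \<Longrightarrow> norm (Gf X x - Gf X t) < r"
    unfolding isCont_def LIM_eq using \<open>r > 0\<close> by blast
  show "\<exists>s>0. \<forall>x. x \<noteq> 0 \<and> norm (x - 0) < s \<longrightarrow> norm ((Phi X (t + x) - Phi X t) / x - Gf X t) < r"
  proof (intro exI[of _ d] conjI allI impI)
    fix h :: real assume h: "h \<noteq> 0 \<and> norm (h - 0) < d"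
    have "norm (Gf X (t + h) - Gf X t) < r" using d(2)[of "t + h"] h by auto
    then show "norm ((Phi X (t + h) - Phi X t) / h - Gf X t) < r"
      using Phi_quot[OF X, of h t] h by (auto simp: abs_less_iff)
  qed (use \<open>d > 0\<close> in auto)
qed

definition pd :: "(real \<Rightarrow> real) \<Rightarrow> real \<Rightarrow> real" where
  "pd f t = (if f differentiable (at t) then deriv f t else 0)"

lemma partial2_pd: "partial2 D u = pd (\<lambda>s. D u s)"
  unfolding partial2_def pd_def by auto

lemma pd_bounds:
  assumes ev: "\<forall>\<^sub>F h in at 0. a \<le> (f (t + h) - f t) / h \<and> (f (t + h) - f t) / h \<le> b" and "a \<le> 0" "0 \<le> b"
  shows "a \<le> pd f t \<and> pd f t \<le> b"
proof (cases "f differentiable (at t)")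
  case True
  then have "(f has_real_derivative deriv f t) (at t)" by (simp add: DERIV_deriv_iff_real_differentiable)
  then have lim: "((\<lambda>h. (f (t + h) - f t) / h) \<longlongrightarrow> deriv f t) (at 0)" unfolding DERIV_def .
  have "a \<le> deriv f t" by (rule tendsto_lowerbound[OF lim]) (use ev in \<open>auto elim: eventually_mono\<close>)
  moreover have "deriv f t \<le> b" by (rule tendsto_upperbound[OF lim]) (use ev in \<open>auto elim: eventually_mono\<close>)
  ultimately show ?thesis using True unfolding pd_def by simp
qed (use assms in \<open>simp add: pd_def\<close>)

lemma pd_Phi_cont: "good X \<Longrightarrow> isCont (Gf X) t \<Longrightarrow> pd (Phi X) t = Gf X t"
  using Phi_deriv[of X t] unfolding pd_def
  by (metis DERIV_imp_deriv real_differentiable_def)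

lemma pd_Phi_01: "good X \<Longrightarrow> 0 \<le> pd (Phi X) t \<and> pd (Phi X) t \<le> 1"
  by (rule pd_bounds) (auto intro!: always_eventually Phi_quot01 simp: eventually_at_filter)

lemma pd_Phi_AE_lebesgue: "good X \<Longrightarrow> AE t in lebesgue. Gf X t = pd (Phi X) t"
proof -
  assume X: "good X"
  have c: "countable {a. \<not> isCont (Gf X) a}"
    by (rule antimono_ctble_discont) (rule Gf_antimono[OF good_meas[OF X]])
  have "{a. \<not> isCont (Gf X) a} \<in> null_sets lebesgue"
    using countable_imp_null_set_lborel[OF c] by (rule null_sets_completionI)
  then show ?thesis
    by (rule AE_I'[where N="{a. \<not> isCont (Gf X) a}"]) (use pd_Phi_cont[OF X] in auto)
qed

lemma pd_Phi_AE: "good X \<Longrightarrow> AE t in M01. pd (Phi X) t = Gf X t"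
proof -
  assume X: "good X"
  have c: "countable {a. \<not> isCont (Gf X) a}"
    by (rule antimono_ctble_discont) (rule Gf_antimono[OF good_meas[OF X]])
  show ?thesis using countable_AE_M01[OF c] by eventually_elim (use pd_Phi_cont[OF X] in auto)
qed

lemma good_pd_Phi: "good X \<Longrightarrow> good (pd (Phi X))"
proof -
  assume X: "good X"
  have "Gf X \<in> borel_measurable lebesgue" using Gf_borel[OF good_meas[OF X]] by (rule borel_lebesgue)
  then have "pd (Phi X) \<in> borel_measurable lebesgue"
    by (rule borel_measurable_AE) (rule pd_Phi_AE_lebesgue[OF X])
  then have "pd (Phi X) \<in> borel_measurable M01" by (rule measurable_restrict_space1)
  then show ?thesis unfolding good_def using pd_Phi_01[OF X] by auto
qed

lemma Gf_AE_cong: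
  assumes X: "X \<in> borel_measurable M01" and Y: "Y \<in> borel_measurable M01" and ae: "AE s in M01. X s = Y s"
  shows "Gf X = Gf Y"
proof
  fix t
  have "emeasure M01 {s \<in> {0..1}. t < X s} = emeasure M01 {s \<in> {0..1}. t < Y s}"
    by (rule emeasure_eq_AE) (use ae Gf_sets[OF X] Gf_sets[OF Y] in auto)
  then show "Gf X t = Gf Y t" unfolding Gf_def measure_def by simp
qed

lemma Phi_AE_cong:
  assumes X: "good X" and Y: "good Y" and ae: "AE s in M01. X s = Y s"
  shows "Phi X = Phi Y"
proof
  fix v
  show "Phi X v = Phi Y v" unfolding Phi_def
    by (rule integral_cong_AE) (use ae good_meas[OF X] good_meas[OF Y] in auto)
qed

lemma Gf_rc:
  assumes X: "X \<in> borel_measurable M01" and s: "s < Gf X t"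
  shows "\<exists>t'>t. s < Gf X t'"
proof -
  define A where "A n = {x \<in> {0..1}. t + 1 / Suc n < X x}" for n :: nat
  have "range A \<subseteq> sets M01" unfolding A_def using Gf_sets[OF X] by auto
  moreover have "incseq A"
    unfolding incseq_def A_def
  proof (intro allI impI subsetI)
    fix m n :: nat and x assume "m \<le> n" "x \<in> {x \<in> {0..1}. t + 1 / Suc m < X x}"
    moreover have "1 / real (Suc n) \<le> 1 / Suc m" using \<open>m \<le> n\<close> by (simp add: frac_le)
    ultimately show "x \<in> {x \<in> {0..1}. t + 1 / Suc n < X x}" by auto
  qed
  ultimately have lim: "(\<lambda>n. measure M01 (A n)) \<longlonglongrightarrow> measure M01 (\<Union>(range A))"
    by (rule finite_measure.finite_Lim_measure_incseq[OF finite_M01])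
  have "\<Union>(range A) = {x \<in> {0..1}. t < X x}"
  proof (intro set_eqI iffI)
    fix x assume "x \<in> \<Union>(range A)"
    then obtain n where "x \<in> A n" by auto
    then show "x \<in> {x \<in> {0..1}. t < X x}" unfolding A_def
      by (auto intro: less_trans[rotated] simp: less_add_same_cancel1)
  next
    fix x assume x: "x \<in> {x \<in> {0..1}. t < X x}"
    then obtain n where "1 / Suc n < X x - t"
      using reals_Archimedean[of "X x - t"] by (auto simp: inverse_eq_divide)
    then have "x \<in> A n" using x unfolding A_def by auto
    then show "x \<in> \<Union>(range A)" by auto
  qed
  then have "(\<lambda>n. measure M01 (A n)) \<longlonglongrightarrow> Gf X t" using lim unfolding Gf_def by simp
  then have "\<forall>\<^sub>F n in sequentially. s < measure M01 (A n)" using s by (rule order_tendstoD)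
  then obtain n where "s < measure M01 (A n)" by (auto dest: eventually_happens)
  then show ?thesis unfolding A_def Gf_def by (intro exI[of _ "t + 1 / Suc n"]) auto
qed


lemma pair_M01: "pair_sigma_finite M01 M01"
proof -
  have "sigma_finite_measure M01" using finite_M01 by (simp add: finite_measure_def)
  then show ?thesis by (simp add: pair_sigma_finite_def)
qed

lemma tonelli_M01:
  fixes f :: "real \<Rightarrow> real \<Rightarrow> ennreal"
  assumes "(\<lambda>(s, t). f s t) \<in> borel_measurable (M01 \<Otimes>\<^sub>M M01)"
  shows "(\<integral>\<^sup>+ t. (\<integral>\<^sup>+ s. f s t \<partial>M01) \<partial>M01) = (\<integral>\<^sup>+ s. (\<integral>\<^sup>+ t. f s t \<partial>M01) \<partial>M01)"
  using pair_sigma_finite.Fubini'[OF pair_M01, of f] assms by simp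

lemma emeasure_M01_le_interval:
  assumes "A \<in> sets M01" "A \<subseteq> {a..b}" "a \<le> b"
  shows "emeasure M01 A \<le> ennreal (b - a)"
proof -
  have "emeasure M01 A = emeasure lebesgue A" using assms(1) by (simp add: sets_M01 emeasure_M01)
  also have "\<dots> \<le> emeasure lebesgue {a..b}" using assms(1,2) by (intro emeasure_mono) (auto simp: sets_M01)
  also have "\<dots> = ennreal (b - a)" using assms(3) by simp
  finally show ?thesis .
qed

lemma Gf_contract:
  assumes X: "good X" and Y: "good Y"
  shows "integral\<^sup>L M01 (\<lambda>t. \<bar>Gf X t - Gf Y t\<bar>) \<le> integral\<^sup>L M01 (\<lambda>s. \<bar>X s - Y s\<bar>)"
proof -
  have Xm[measurable]: "X \<in> borel_measurable M01" and Ym[measurable]: "Y \<in> borel_measurable M01"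
    using X Y by (auto simp: good_def)
  define f :: "real \<Rightarrow> real \<Rightarrow> ennreal" where "f s t = indicator {s. (t < X s) \<noteq> (t < Y s)} s" for s t
  have fm: "(\<lambda>(s, t). f s t) \<in> borel_measurable (M01 \<Otimes>\<^sub>M M01)"
    unfolding f_def indicator_def by measurable
  have D_sets: "{s \<in> {0..1}. (t < X s) \<noteq> (t < Y s)} \<in> sets M01" for t
  proof -
    have "{s \<in> space M01. (t < X s) \<noteq> (t < Y s)} \<in> sets M01" by measurable
    then show ?thesis by simp
  qed
  have step1: "ennreal \<bar>Gf X t - Gf Y t\<bar> \<le> (\<integral>\<^sup>+ s. f s t \<partial>M01)" for t
  proof -
    define A where "A = {s \<in> {0..1}. t < X s}"
    define B where "B = {s \<in> {0..1}. t < Y s}"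
    define D where "D = {s \<in> {0..1}. (t < X s) \<noteq> (t < Y s)}"
    have sets: "A \<in> sets M01" "B \<in> sets M01" "D \<in> sets M01"
      unfolding A_def B_def D_def using Gf_sets[OF Xm] Gf_sets[OF Ym] D_sets by auto
    have "measure M01 A \<le> measure M01 (B \<union> D)"
      using sets by (intro finite_measure.finite_measure_mono[OF finite_M01]) (auto simp: A_def B_def D_def)
    also have "\<dots> \<le> measure M01 B + measure M01 D" using sets by (intro measure_Un_le) auto
    finally have 1: "measure M01 A \<le> measure M01 B + measure M01 D" .
    have "measure M01 B \<le> measure M01 (A \<union> D)"
      using sets by (intro finite_measure.finite_measure_mono[OF finite_M01]) (auto simp: A_def B_def D_def)
    also have "\<dots> \<le> measure M01 A + measure M01 D" using sets by (intro measure_Un_le) auto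
    finally have 2: "measure M01 B \<le> measure M01 A + measure M01 D" .
    have "\<bar>Gf X t - Gf Y t\<bar> \<le> measure M01 D"
      using 1 2 unfolding Gf_def A_def B_def by linarith
    then have "ennreal \<bar>Gf X t - Gf Y t\<bar> \<le> emeasure M01 D"
      by (simp add: finite_measure.emeasure_eq_measure[OF finite_M01])
    also have "emeasure M01 D = (\<integral>\<^sup>+ s. f s t \<partial>M01)"
      unfolding f_def D_def
      by (subst nn_integral_indicator') (use D_sets in \<open>auto simp: Int_def conj_commute\<close>)
    finally show ?thesis .
  qed
  have step2: "(\<integral>\<^sup>+ t. f s t \<partial>M01) \<le> ennreal \<bar>X s - Y s\<bar>" for s
  proof -
    have Ts: "{t \<in> {0..1}. (t < X s) \<noteq> (t < Y s)} \<in> sets M01"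
    proof -
      have "{t \<in> space M01. (t < X s) \<noteq> (t < Y s)} \<in> sets M01" by measurable
      then show ?thesis by simp
    qed
    have "(\<integral>\<^sup>+ t. f s t \<partial>M01) = emeasure M01 {t \<in> {0..1}. (t < X s) \<noteq> (t < Y s)}"
      unfolding f_def
    proof -
      have "(\<lambda>t. indicator {s. (t < X s) \<noteq> (t < Y s)} s :: ennreal) = indicator {t. (t < X s) \<noteq> (t < Y s)}"
        by (auto simp: indicator_def)
      moreover have "{t. (t < X s) \<noteq> (t < Y s)} \<inter> space M01 = {t \<in> {0..1}. (t < X s) \<noteq> (t < Y s)}" by auto
      ultimately show "(\<integral>\<^sup>+ t. indicator {s. (t < X s) \<noteq> (t < Y s)} s \<partial>M01) = emeasure M01 {t \<in> {0..1}. (t < X s) \<noteq> (t < Y s)}"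
        using nn_integral_indicator'[of "{t. (t < X s) \<noteq> (t < Y s)}" M01] Ts by simp
    qed
    also have "\<dots> \<le> ennreal (max (X s) (Y s) - min (X s) (Y s))"
      by (rule emeasure_M01_le_interval[OF Ts]) auto
    also have "max (X s) (Y s) - min (X s) (Y s) = \<bar>X s - Y s\<bar>" by auto
    finally show ?thesis .
  qed
  have int_abs: "integrable M01 (\<lambda>s. \<bar>X s - Y s\<bar>)"
    by (rule integrable_M01_bound[where B=1]) (use good_AE[OF X] good_AE[OF Y] in \<open>auto elim: eventually_rev_mp\<close>)
  have "(\<integral>\<^sup>+ t. ennreal \<bar>Gf X t - Gf Y t\<bar> \<partial>M01) \<le> (\<integral>\<^sup>+ t. (\<integral>\<^sup>+ s. f s t \<partial>M01) \<partial>M01)"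
    by (intro nn_integral_mono step1)
  also have "\<dots> = (\<integral>\<^sup>+ s. (\<integral>\<^sup>+ t. f s t \<partial>M01) \<partial>M01)" by (rule tonelli_M01[OF fm])
  also have "\<dots> \<le> (\<integral>\<^sup>+ s. ennreal \<bar>X s - Y s\<bar> \<partial>M01)" by (intro nn_integral_mono step2)
  also have "\<dots> = ennreal (integral\<^sup>L M01 (\<lambda>s. \<bar>X s - Y s\<bar>))"
    by (rule nn_integral_eq_integral[OF int_abs]) auto
  finally have le: "(\<integral>\<^sup>+ t. ennreal \<bar>Gf X t - Gf Y t\<bar> \<partial>M01) \<le> ennreal (integral\<^sup>L M01 (\<lambda>s. \<bar>X s - Y s\<bar>))" .
  have GXm: "Gf X \<in> borel_measurable M01" "Gf Y \<in> borel_measurable M01"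
    using good_Gf[OF Xm] good_Gf[OF Ym] by (auto simp: good_def)
  have "integral\<^sup>L M01 (\<lambda>t. \<bar>Gf X t - Gf Y t\<bar>) = enn2real (\<integral>\<^sup>+ t. ennreal \<bar>Gf X t - Gf Y t\<bar> \<partial>M01)"
    by (rule integral_eq_nn_integral) (use GXm in auto)
  also have "\<dots> \<le> integral\<^sup>L M01 (\<lambda>s. \<bar>X s - Y s\<bar>)"
    by (rule enn2real_leI[OF _ le]) simp
  finally show ?thesis .
qed


lemma emeasure_M01_Ico: "0 \<le> a \<Longrightarrow> a \<le> 1 \<Longrightarrow> emeasure M01 {0..<a} = ennreal a"
  by (subst emeasure_M01) auto

lemma measure_M01_Ico: "0 \<le> a \<Longrightarrow> a \<le> b \<Longrightarrow> b \<le> 1 \<Longrightarrow> measure M01 {a..<b} = b - a"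
  by (subst measure_M01) auto

lemma Gf_meas: "X \<in> borel_measurable M01 \<Longrightarrow> Gf X \<in> borel_measurable M01"
  using good_Gf by (auto simp: good_def)

lemma Phi_LC:
  assumes X: "good X" and v: "0 \<le> v" "v \<le> 1"
  shows "Phi X v = integral\<^sup>L M01 (\<lambda>t. indicator {..<v} t * Gf X t)"
proof -
  have Xm[measurable]: "X \<in> borel_measurable M01" using X by (auto simp: good_def)
  define f :: "real \<Rightarrow> real \<Rightarrow> ennreal" where "f s t = indicator {s. t < X s \<and> t < v} s" for s t
  have fm: "(\<lambda>(s, t). f s t) \<in> borel_measurable (M01 \<Otimes>\<^sub>M M01)"
    unfolding f_def indicator_def by measurable
  have inner_s: "(\<integral>\<^sup>+ t. f s t \<partial>M01) = ennreal (min (X s) v)" if s: "0 \<le> X s" "X s \<le> 1" for s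
  proof -
    have Ts: "{t. t < X s \<and> t < v} \<inter> space M01 = {0..<min (X s) v}" using s by auto
    have "(\<lambda>t. f s t) = indicator {t. t < X s \<and> t < v}" unfolding f_def by (auto simp: indicator_def)
    then have "(\<integral>\<^sup>+ t. f s t \<partial>M01) = emeasure M01 ({t. t < X s \<and> t < v} \<inter> space M01)"
      using nn_integral_indicator'[of "{t. t < X s \<and> t < v}" M01] Ts by (simp add: sets_M01)
    also have "\<dots> = ennreal (min (X s) v)" unfolding Ts using s v by (intro emeasure_M01_Ico) auto
    finally show ?thesis .
  qed
  have inner_t: "(\<integral>\<^sup>+ s. f s t \<partial>M01) = ennreal (indicator {..<v} t * Gf X t)" for t
  proof (cases "t < v")
    case True
    have "(\<lambda>s. f s t) = indicator {s. t < X s}" unfolding f_def using True by (auto simp: indicator_def)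
    moreover have "{s. t < X s} \<inter> space M01 = {s \<in> {0..1}. t < X s}" by auto
    ultimately have "(\<integral>\<^sup>+ s. f s t \<partial>M01) = emeasure M01 {s \<in> {0..1}. t < X s}"
      using nn_integral_indicator'[of "{s. t < X s}" M01] Gf_sets[OF Xm, of t] by simp
    also have "\<dots> = ennreal (Gf X t)" unfolding Gf_def by (simp add: finite_measure.emeasure_eq_measure[OF finite_M01])
    finally show ?thesis using True by simp
  next
    case False
    then have "(\<lambda>s. f s t) = (\<lambda>s. 0)" unfolding f_def by (auto simp: indicator_def)
    then show ?thesis using False by simp
  qed
  have int1: "integrable M01 (\<lambda>t. indicator {..<v} t * Gf X t)"
  proof (rule integrable_M01_bound[where B=1])
    show "(\<lambda>t. indicator {..<v} t * Gf X t) \<in> borel_measurable M01"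
      using Gf_meas[OF Xm] by measurable
    show "AE t in M01. \<bar>indicator {..<v} t * Gf X t\<bar> \<le> (1::real)"
      using Gf_bounds[of X] by (auto simp: indicator_def)
  qed
  have "ennreal (Phi X v) = (\<integral>\<^sup>+ s. ennreal (min (X s) v) \<partial>M01)"
    unfolding Phi_def
    by (rule nn_integral_eq_integral[symmetric, OF Phi_integrable[OF X]]) (use good_AE[OF X] v in \<open>auto elim: eventually_mono\<close>)
  also have "\<dots> = (\<integral>\<^sup>+ s. (\<integral>\<^sup>+ t. f s t \<partial>M01) \<partial>M01)"
    by (rule nn_integral_cong_AE) (use good_AE[OF X] inner_s in \<open>auto elim: eventually_mono\<close>)
  also have "\<dots> = (\<integral>\<^sup>+ t. (\<integral>\<^sup>+ s. f s t \<partial>M01) \<partial>M01)" by (rule tonelli_M01[OF fm, symmetric])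
  also have "\<dots> = (\<integral>\<^sup>+ t. ennreal (indicator {..<v} t * Gf X t) \<partial>M01)" by (simp add: inner_t)
  also have "\<dots> = ennreal (integral\<^sup>L M01 (\<lambda>t. indicator {..<v} t * Gf X t))"
    by (rule nn_integral_eq_integral[OF int1]) (use Gf_bounds[of X] in auto)
  finally have eq: "ennreal (Phi X v) = ennreal (integral\<^sup>L M01 (\<lambda>t. indicator {..<v} t * Gf X t))" .
  have "0 \<le> Phi X v" unfolding Phi_def
    by (rule integral_nonneg_AE) (use good_AE[OF X] v in \<open>auto elim: eventually_mono\<close>)
  moreover have "0 \<le> integral\<^sup>L M01 (\<lambda>t. indicator {..<v} t * Gf X t)"
    by (rule integral_nonneg_AE) (use Gf_bounds[of X] in auto)
  ultimately show ?thesis using eq by simp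
qed

lemma Phi_lip_L1:
  assumes X: "good X" and Y: "good Y"
  shows "\<bar>Phi X v - Phi Y v\<bar> \<le> integral\<^sup>L M01 (\<lambda>s. \<bar>X s - Y s\<bar>)"
proof -
  have int_abs: "integrable M01 (\<lambda>s. \<bar>X s - Y s\<bar>)"
    by (rule integrable_M01_bound[where B=1]) (use good_AE[OF X] good_AE[OF Y] good_meas[OF X] good_meas[OF Y] in \<open>auto elim: eventually_rev_mp\<close>)
  have "Phi X v - Phi Y v = integral\<^sup>L M01 (\<lambda>s. min (X s) v - min (Y s) v)"
    unfolding Phi_def by (subst Bochner_Integration.integral_diff) (auto intro: Phi_integrable X Y)
  also have "\<bar>\<dots>\<bar> \<le> integral\<^sup>L M01 (\<lambda>s. \<bar>X s - Y s\<bar>)"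
  proof (rule integral_abs_bound_integral)
    show "integrable M01 (\<lambda>s. min (X s) v - min (Y s) v)"
      by (intro Bochner_Integration.integrable_diff Phi_integrable X Y)
  qed (auto intro: int_abs)
  finally show ?thesis .
qed

lemma Phi_lip_Gf:
  assumes X: "good X" and Y: "good Y" and v: "0 \<le> v" "v \<le> 1"
  shows "\<bar>Phi X v - Phi Y v\<bar> \<le> integral\<^sup>L M01 (\<lambda>t. \<bar>Gf X t - Gf Y t\<bar>)"
proof -
  have gx: "good (Gf X)" "good (Gf Y)" using good_Gf good_meas X Y by auto
  have ii: "integrable M01 (\<lambda>t. indicator {..<v} t * Gf Z t)" if "good Z" for Z
  proof (rule integrable_M01_bound[where B=1])
    show "(\<lambda>t. indicator {..<v} t * Gf Z t) \<in> borel_measurable M01"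
      using Gf_meas[OF good_meas[OF that]] by measurable
  qed (use Gf_bounds[of Z] in \<open>auto simp: indicator_def\<close>)
  have b1: "\<bar>Gf X t - Gf Y t\<bar> \<le> 1" for t using Gf_bounds[of X t] Gf_bounds[of Y t] by auto
  have int_abs: "integrable M01 (\<lambda>t. \<bar>Gf X t - Gf Y t\<bar>)"
    by (rule integrable_M01_bound[where B=1]) (use b1 good_meas[OF gx(1)] good_meas[OF gx(2)] in auto)
  have "Phi X v - Phi Y v = integral\<^sup>L M01 (\<lambda>t. indicator {..<v} t * Gf X t - indicator {..<v} t * Gf Y t)"
    unfolding Phi_LC[OF X v] Phi_LC[OF Y v] by (subst Bochner_Integration.integral_diff) (auto intro: ii X Y)
  also have "\<bar>\<dots>\<bar> \<le> integral\<^sup>L M01 (\<lambda>t. \<bar>Gf X t - Gf Y t\<bar>)"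
  proof (rule integral_abs_bound_integral)
    show "integrable M01 (\<lambda>t. indicator {..<v} t * Gf X t - indicator {..<v} t * Gf Y t)"
      by (intro Bochner_Integration.integrable_diff ii X Y)
  qed (auto intro: int_abs simp: indicator_def)
  finally show ?thesis .
qed

lemma Gf_Gf_eq:
  fixes Y :: "real \<Rightarrow> real"
  assumes anti: "\<And>x y. x \<le> y \<Longrightarrow> Y y \<le> Y x" and b: "\<And>t. 0 \<le> Y t \<and> Y t \<le> 1"
    and rc: "\<And>t s. s < Y t \<Longrightarrow> \<exists>t'>t. s < Y t'" and t: "0 \<le> t" "t < 1"
  shows "Gf (Gf Y) t = Y t"
proof -
  have Ym: "Y \<in> borel_measurable M01" using antimono_borel[OF anti] by (rule borel_M01)
  have claim: "t < Gf Y s \<longleftrightarrow> s < Y t" for s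
  proof
    assume st: "s < Y t"
    obtain t' where t': "t' > t" "s < Y t'" using rc[OF st] by blast
    define t'' where "t'' = min t' 1"
    have "t < t''" using t t' unfolding t''_def by auto
    have "Y t' \<le> Y t''" using anti[of t'' t'] unfolding t''_def by auto
    have sub: "{0..t''} \<subseteq> {x \<in> {0..1}. s < Y x}"
    proof
      fix x assume "x \<in> {0..t''}"
      then have "Y t'' \<le> Y x" "x \<in> {0..1}" using anti[of x t''] unfolding t''_def by auto
      then show "x \<in> {x \<in> {0..1}. s < Y x}" using \<open>Y t' \<le> Y t''\<close> t' by auto
    qed
    have "t'' = measure M01 {0..t''}" using \<open>t < t''\<close> t unfolding t''_def by (subst measure_M01) auto
    also have "\<dots> \<le> Gf Y s" unfolding Gf_def
      by (intro finite_measure.finite_measure_mono[OF finite_M01] sub Gf_sets[OF Ym])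
    finally show "t < Gf Y s" using \<open>t < t''\<close> by simp
  next
    assume ts: "t < Gf Y s"
    show "s < Y t"
    proof (rule ccontr)
      assume "\<not> s < Y t"
      have sub: "{x \<in> {0..1}. s < Y x} \<subseteq> {0..<t}"
      proof
        fix x assume x: "x \<in> {x \<in> {0..1}. s < Y x}"
        have "x < t"
        proof (rule ccontr)
          assume "\<not> x < t"
          then have "Y x \<le> Y t" using anti[of t x] by simp
          then show False using x \<open>\<not> s < Y t\<close> by simp
        qed
        then show "x \<in> {0..<t}" using x by auto
      qed
      have "Gf Y s \<le> measure M01 {0..<t}" unfolding Gf_def
        by (intro finite_measure.finite_measure_mono[OF finite_M01] sub) (use t in \<open>auto simp: sets_M01\<close>)
      also have "\<dots> = t" using t by (subst measure_M01_Ico) auto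
      finally show False using ts by simp
    qed
  qed
  have "Gf (Gf Y) t = measure M01 {s \<in> {0..1}. s < Y t}" unfolding Gf_def[of "Gf Y"] using claim by simp
  also have "{s \<in> {0..1}. s < Y t} = {0..<Y t}" using b[of t] by auto
  also have "measure M01 {0..<Y t} = Y t" using b[of t] by (subst measure_M01_Ico) auto
  finally show ?thesis .
qed

lemma Gf3:
  assumes X: "X \<in> borel_measurable M01" and t: "0 \<le> t" "t < 1"
  shows "Gf (Gf (Gf X)) t = Gf X t"
  by (rule Gf_Gf_eq[OF Gf_antimono[OF X] Gf_bounds Gf_rc[OF X] t])

lemma Gf3_AE: "X \<in> borel_measurable M01 \<Longrightarrow> AE t in M01. Gf (Gf (Gf X)) t = Gf X t"
  using AE_M01_interior by eventually_elim (auto intro: Gf3)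


definition Iv :: "(real \<Rightarrow> real) \<Rightarrow> real \<Rightarrow> real" where
  "Iv g v = integral\<^sup>L M01 (\<lambda>t. indicator {..<v} t * g t)"

lemma Iv_bounds:
  fixes g :: "real \<Rightarrow> real"
  assumes anti: "\<And>x y. x \<le> y \<Longrightarrow> g y \<le> g x" and b: "\<And>t. 0 \<le> g t \<and> g t \<le> 1"
    and ab: "0 \<le> a" "a \<le> b" "b \<le> 1"
  shows "(b - a) * g b \<le> Iv g b - Iv g a \<and> Iv g b - Iv g a \<le> (b - a) * g a"
proof -
  have gm: "g \<in> borel_measurable M01" using antimono_borel[OF anti] by (rule borel_M01)
  have ii: "integrable M01 (\<lambda>t. indicator A t * g t)" if "A \<in> sets borel" for A
  proof (rule integrable_M01_bound[where B=1])
    show "(\<lambda>t. indicator A t * g t) \<in> borel_measurable M01"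
      using gm borel_M01[OF borel_measurable_indicator[OF that]] by (intro borel_measurable_times) auto
  qed (use b in \<open>auto simp: indicator_def\<close>)
  have ic: "integrable M01 (\<lambda>t. c * indicator {a..<b} t)" for c :: real
    by (intro integrable_mult_right integrable_real_indicator) (use ab in \<open>auto simp: sets_M01 finite_measure.emeasure_finite[OF finite_M01] less_top[symmetric]\<close>)
  have ind: "indicator {..<b} t - indicator {..<a} t = (indicator {a..<b} t :: real)" for t
    using ab by (auto simp: indicator_def)
  have eq: "Iv g b - Iv g a = integral\<^sup>L M01 (\<lambda>t. indicator {a..<b} t * g t)"
    unfolding Iv_def
    by (subst Bochner_Integration.integral_diff[symmetric]) (auto intro!: ii Bochner_Integration.integral_cong simp: ind left_diff_distrib[symmetric])
  have mi: "integral\<^sup>L M01 (\<lambda>t. c * indicator {a..<b} t) = c * (b - a)" for c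
  proof -
    have "integral\<^sup>L M01 (\<lambda>t. c * indicator {a..<b} t) = c * integral\<^sup>L M01 (indicator {a..<b})" by simp
    also have "integral\<^sup>L M01 (indicator {a..<b} :: real \<Rightarrow> real) = measure M01 ({a..<b} \<inter> {0..1})"
      by (simp add: integral_indicator)
    also have "{a..<b} \<inter> {0..1} = {a..<b}" using ab by auto
    also have "measure M01 {a..<b} = b - a" using ab by (intro measure_M01_Ico) auto
    finally show ?thesis .
  qed
  have "(b - a) * g b = integral\<^sup>L M01 (\<lambda>t. g b * indicator {a..<b} t)" by (metis mi mult.commute)
  also have "\<dots> \<le> integral\<^sup>L M01 (\<lambda>t. indicator {a..<b} t * g t)"
    by (rule integral_mono[OF ic ii]) (auto simp: indicator_def intro: anti)
  finally have 1: "(b - a) * g b \<le> Iv g b - Iv g a" using eq by simp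
  have "integral\<^sup>L M01 (\<lambda>t. indicator {a..<b} t * g t) \<le> integral\<^sup>L M01 (\<lambda>t. g a * indicator {a..<b} t)"
    by (rule integral_mono[OF ii ic]) (auto simp: indicator_def intro: anti)
  also have "\<dots> = (b - a) * g a" by (metis mi mult.commute)
  finally show ?thesis using 1 eq by simp
qed

lemma mono_L1_conv:
  fixes gs :: "nat \<Rightarrow> real \<Rightarrow> real" and g :: "real \<Rightarrow> real"
  assumes antin: "\<And>n x y. x \<le> y \<Longrightarrow> gs n y \<le> gs n x" and anti: "\<And>x y. x \<le> y \<Longrightarrow> g y \<le> g x"
    and bn: "\<And>n t. 0 \<le> gs n t \<and> gs n t \<le> 1" and b: "\<And>t. 0 \<le> g t \<and> g t \<le> 1"
    and conv: "\<And>v. 0 \<le> v \<Longrightarrow> v \<le> 1 \<Longrightarrow> (\<lambda>n. Iv (gs n) v) \<longlonglongrightarrow> Iv g v"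
  shows "(\<lambda>n. integral\<^sup>L M01 (\<lambda>t. \<bar>gs n t - g t\<bar>)) \<longlonglongrightarrow> 0"
proof -
  have pw: "(\<lambda>n. gs n t) \<longlonglongrightarrow> g t" if t: "0 < t" "t < 1" and c: "isCont g t" for t
    unfolding tendsto_iff
  proof (intro allI impI)
    fix e :: real assume "e > 0"
    define e2 where "e2 = e / 2"
    have e2: "e2 > 0" "e = 2 * e2" using \<open>e > 0\<close> unfolding e2_def by auto
    from c obtain d where d: "d > 0" "\<And>x. x \<noteq> t \<and> norm (x - t) < d \<Longrightarrow> norm (g x - g t) < e2"
      unfolding isCont_def LIM_eq using e2(1) by blast
    define h where "h = min (d / 2) (min (t / 2) ((1 - t) / 2))"
    have hh1: "h \<le> d / 2" unfolding h_def by (rule min.cobounded1)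
    have hh2: "h \<le> min (t / 2) ((1 - t) / 2)" unfolding h_def by (rule min.cobounded2)
    have hh: "h \<le> d / 2" "h \<le> t / 2" "h \<le> (1 - t) / 2" "0 < h"
      using hh1 hh2 d t unfolding h_def by auto
    have hh': "2 * h \<le> d" "2 * h \<le> t" "2 * h \<le> 1 - t" using hh by auto
    have h: "0 < h" "h < d" "0 \<le> t - h" "t + h \<le> 1" using hh' hh(4) d t by linarith+
    have n1: "\<bar>g (t - h) - g t\<bar> < e2" "\<bar>g (t + h) - g t\<bar> < e2"
      using d(2)[of "t - h"] d(2)[of "t + h"] h by auto
    have gl: "g (t - h) < g t + e2" and gr: "g t - e2 < g (t + h)" using n1 by linarith+
    have c1: "(\<lambda>n. Iv (gs n) t - Iv (gs n) (t - h)) \<longlonglongrightarrow> Iv g t - Iv g (t - h)"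
      using h t by (intro tendsto_diff conv) auto
    have c2: "(\<lambda>n. Iv (gs n) (t + h) - Iv (gs n) t) \<longlonglongrightarrow> Iv g (t + h) - Iv g t"
      using h t by (intro tendsto_diff conv) auto
    have he: "0 < h * e2" using h e2 by simp
    have ev1: "\<forall>\<^sub>F n in sequentially. Iv (gs n) t - Iv (gs n) (t - h) < Iv g t - Iv g (t - h) + h * e2"
      by (rule order_tendstoD(2)[OF c1]) (use he in auto)
    have ev2: "\<forall>\<^sub>F n in sequentially. Iv g (t + h) - Iv g t - h * e2 < Iv (gs n) (t + h) - Iv (gs n) t"
      by (rule order_tendstoD(1)[OF c2]) (use he in auto)
    have B: "Iv g t - Iv g (t - h) \<le> h * g (t - h)"
      using Iv_bounds[of g "t - h" t, OF anti b] h t by auto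
    have D: "h * g (t + h) \<le> Iv g (t + h) - Iv g t"
      using Iv_bounds[of g t "t + h", OF anti b] h t by auto
    have gl': "h * g (t - h) < h * g t + h * e2" using mult_strict_left_mono[OF gl h(1)] by (simp add: algebra_simps)
    have gr': "h * g t - h * e2 < h * g (t + h)" using mult_strict_left_mono[OF gr h(1)] by (simp add: algebra_simps)
    show "\<forall>\<^sub>F n in sequentially. dist (gs n t) (g t) < e"
      using ev1 ev2
    proof eventually_elim
      case (elim n)
      have A: "h * gs n t \<le> Iv (gs n) t - Iv (gs n) (t - h)"
        using Iv_bounds[of "gs n" "t - h" t, OF antin bn] h t by auto
      have C: "Iv (gs n) (t + h) - Iv (gs n) t \<le> h * gs n t"
        using Iv_bounds[of "gs n" t "t + h", OF antin bn] h t by auto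
      have "h * gs n t < h * (g t + 2 * e2)" using A B elim(1) gl' by (simp add: algebra_simps)
      then have u: "gs n t < g t + 2 * e2" using h(1) by simp
      have "h * (g t - 2 * e2) < h * gs n t" using C D elim(2) gr' by (simp add: algebra_simps)
      then have l: "g t - 2 * e2 < gs n t" using h(1) by simp
      show ?case using u l e2(2) by (simp add: dist_real_def abs_less_iff)
    qed
  qed
  have gm: "g \<in> borel_measurable M01" using antimono_borel[OF anti] by (rule borel_M01)
  have gsm: "gs n \<in> borel_measurable M01" for n using antimono_borel[OF antin] by (rule borel_M01)
  have cd: "countable {a. \<not> isCont g a}" by (rule antimono_ctble_discont[OF anti])
  have ae: "AE t in M01. (\<lambda>n. \<bar>gs n t - g t\<bar>) \<longlonglongrightarrow> 0"
    using AE_M01_interior countable_AE_M01[OF cd]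
  proof eventually_elim
    case (elim t)
    then have "(\<lambda>n. gs n t - g t) \<longlonglongrightarrow> 0" using pw[of t] by (simp add: LIM_zero)
    then show ?case by (rule tendsto_rabs_zero)
  qed
  have "(\<lambda>n. integral\<^sup>L M01 (\<lambda>t. \<bar>gs n t - g t\<bar>)) \<longlonglongrightarrow> integral\<^sup>L M01 (\<lambda>t. 0)"
  proof (rule integral_dominated_convergence[where w="\<lambda>t. 1"])
    show "integrable M01 (\<lambda>t. 1::real)"
      by (simp add: finite_measure.emeasure_finite[OF finite_M01])
    show "AE t in M01. norm \<bar>gs n t - g t\<bar> \<le> 1" for n
    proof (intro AE_I2)
      fix t show "norm \<bar>gs n t - g t\<bar> \<le> 1" using bn[of n t] b[of t] by auto
    qed
  qed (use ae gm gsm in auto)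
  then show ?thesis by simp
qed

definition ext01 :: "(real \<Rightarrow> real) \<Rightarrow> real \<Rightarrow> real" where
  "ext01 f t = f (max 0 (min 1 t))"

definition monolip :: "(real \<Rightarrow> real) \<Rightarrow> bool" where
  "monolip f \<longleftrightarrow> (\<forall>x y. 0 \<le> x \<longrightarrow> x \<le> y \<longrightarrow> y \<le> 1 \<longrightarrow> f x \<le> f y \<and> f y - f x \<le> y - x)"

lemma ext01_mono: "monolip f \<Longrightarrow> mono (ext01 f)"
  unfolding monolip_def mono_def ext01_def by (auto simp: max_def min_def)

lemma ext01_lip: "monolip f \<Longrightarrow> \<bar>ext01 f x - ext01 f y\<bar> \<le> \<bar>x - y\<bar>"
proof -
  assume f: "monolip f"
  have *: "\<bar>ext01 f x - ext01 f y\<bar> \<le> \<bar>x - y\<bar>" if "x \<le> y" for x y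
  proof -
    let ?x = "max 0 (min 1 x)" and ?y = "max 0 (min 1 y)"
    have "0 \<le> ?x" "?x \<le> ?y" "?y \<le> 1" using that by (auto simp: max_def min_def)
    then have "f ?x \<le> f ?y" "f ?y - f ?x \<le> ?y - ?x" using f unfolding monolip_def by blast+
    moreover have "?y - ?x \<le> y - x" using that by (auto simp: max_def min_def)
    ultimately show ?thesis using that unfolding ext01_def by auto
  qed
  show ?thesis using *[of x y] *[of y x] by (cases "x \<le> y") (auto simp: abs_minus_commute)
qed

lemma ext01_cont: "monolip f \<Longrightarrow> continuous_on UNIV (ext01 f)"
  unfolding continuous_on_iff
proof (intro ballI allI impI)
  fix x x' :: real and e :: real assume f: "monolip f" and "e > 0"
  then show "\<exists>d>0. \<forall>x'\<in>UNIV. dist x' x < d \<longrightarrow> dist (ext01 f x') (ext01 f x) < e"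
    using ext01_lip[OF f] by (intro exI[of _ e]) (auto simp: dist_real_def intro: le_less_trans)
qed

lemma ext01_eq: "t \<in> {0..1} \<Longrightarrow> ext01 f t = f t"
  unfolding ext01_def by auto

lemma pd_ext01: assumes t: "t \<in> {0<..<1}" shows "pd f t = pd (ext01 f) t"
proof -
  have eq: "\<And>x. x \<in> {0<..<1} \<Longrightarrow> f x = ext01 f x" by (auto simp: ext01_eq)
  have D: "(f has_field_derivative D) (at t) \<longleftrightarrow> (ext01 f has_field_derivative D) (at t)" for D
    using has_field_derivative_transform_within_open[of f D t "{0<..<1}" "ext01 f"]
      has_field_derivative_transform_within_open[of "ext01 f" D t "{0<..<1}" f] t eq by auto
  then have "f differentiable (at t) \<longleftrightarrow> ext01 f differentiable (at t)"
    unfolding real_differentiable_def by auto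
  moreover have "f differentiable (at t) \<Longrightarrow> deriv f t = deriv (ext01 f) t"
    using D by (metis DERIV_deriv_iff_real_differentiable DERIV_imp_deriv)
  ultimately show ?thesis unfolding pd_def by auto
qed

lemma monolip_ae:
  assumes f: "monolip f"
  obtains N where "N \<in> null_sets lebesgue"
    "\<And>t. t \<notin> N \<Longrightarrow> ext01 f differentiable (at t)"
proof -
  obtain N where "N \<in> null_sets lebesgue" "\<And>x. x \<notin> N \<Longrightarrow> ext01 f differentiable (at x)"
    using mono_lipschitz_differentiable_ae[OF ext01_mono[OF f] ext01_lip[OF f]] by blast
  then show thesis using that by blast
qed

lemma deriv_seq:
  fixes g :: "real \<Rightarrow> real"
  assumes "g differentiable (at t)"
  shows "(\<lambda>n. (g (t + 1 / real (Suc n)) - g t) * real (Suc n)) \<longlonglongrightarrow> deriv g t"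
proof -
  have "(g has_field_derivative deriv g t) (at t)" using assms by (simp add: DERIV_deriv_iff_real_differentiable)
  then have lim: "((\<lambda>h. (g (t + h) - g t) / h) \<longlongrightarrow> deriv g t) (at 0)" unfolding DERIV_def .
  have "(\<lambda>n. 1 / real (Suc n)) \<longlonglongrightarrow> 0" by (rule LIMSEQ_Suc[OF lim_inverse_n'])
  moreover have "\<forall>\<^sub>F n in sequentially. 1 / real (Suc n) \<noteq> 0" by auto
  ultimately have "filterlim (\<lambda>n. 1 / real (Suc n)) (at 0) sequentially"
    by (simp add: filterlim_at tendsto_iff)
  from filterlim_compose[OF lim this] show ?thesis by (simp add: field_simps)
qed

lemma monolip_quot01:
  assumes f: "monolip f" and h: "h \<noteq> 0"
  shows "0 \<le> (ext01 f (t + h) - ext01 f t) / h \<and> (ext01 f (t + h) - ext01 f t) / h \<le> 1"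
proof -
  have m: "mono (ext01 f)" by (rule ext01_mono[OF f])
  have l: "\<bar>ext01 f (t + h) - ext01 f t\<bar> \<le> \<bar>h\<bar>" using ext01_lip[OF f, of "t + h" t] by simp
  show ?thesis
  proof (cases "h > 0")
    case True
    then have "ext01 f t \<le> ext01 f (t + h)" using m by (simp add: mono_def)
    then show ?thesis using True l by (auto simp: field_simps)
  next
    case False
    then have hn: "h < 0" using h by auto
    then have "ext01 f (t + h) \<le> ext01 f t" using m by (simp add: mono_def)
    then show ?thesis using hn l by (auto simp: field_simps)
  qed
qed

lemma good_pd_monolip:
  assumes f: "monolip f"
  shows "good (pd f)"
proof -
  obtain N where N: "N \<in> null_sets lebesgue" "\<And>t. t \<notin> N \<Longrightarrow> ext01 f differentiable (at t)"
    using monolip_ae[OF f] by blast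
  define F where "F t = lim (\<lambda>n. (ext01 f (t + 1 / real (Suc n)) - ext01 f t) * real (Suc n))" for t
  have cont: "continuous_on UNIV (ext01 f)" by (rule ext01_cont[OF f])
  have Fm: "F \<in> borel_measurable borel"
    unfolding F_def
  proof (rule borel_measurable_lim_metric)
    fix n :: nat
    have "continuous_on UNIV (\<lambda>t. (ext01 f (t + 1 / real (Suc n)) - ext01 f t) * real (Suc n))"
      by (intro continuous_intros continuous_on_compose2[OF cont]) auto
    then show "(\<lambda>t. (ext01 f (t + 1 / real (Suc n)) - ext01 f t) * real (Suc n)) \<in> borel_measurable borel"
      by (rule borel_measurable_continuous_onI)
  qed
  have eqF: "pd f t = F t" if "t \<in> {0<..<1}" "t \<notin> N" for t
  proof -
    have "pd f t = pd (ext01 f) t" by (rule pd_ext01[OF that(1)])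
    also have "\<dots> = deriv (ext01 f) t" using N(2)[OF that(2)] by (simp add: pd_def)
    also have "\<dots> = F t" unfolding F_def using deriv_seq[OF N(2)[OF that(2)]] by (simp add: limI)
    finally show ?thesis .
  qed
  have "(\<lambda>t. indicator {0..1} t * F t) \<in> borel_measurable lebesgue"
    using borel_lebesgue[OF Fm] by (intro borel_measurable_times borel_measurable_indicator) auto
  moreover have "AE t in lebesgue. indicator {0..1} t * F t = indicator {0..1} t * pd f t"
  proof -
    have "N \<union> {0, 1} \<in> null_sets lebesgue"
      using N(1) by (auto intro: null_sets.Un countable_imp_null_set_lborel null_sets_completionI)
    then show ?thesis
    proof (rule AE_I'[where N="N \<union> {0,1}"])
      show "{x \<in> space lebesgue. indicator {0..1} x * F x \<noteq> indicator {0..1} x * pd f x} \<subseteq> N \<union> {0, 1}"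
      proof
        fix x assume x: "x \<in> {x \<in> space lebesgue. indicator {0..1} x * F x \<noteq> indicator {0..1} x * pd f x}"
        show "x \<in> N \<union> {0, 1}"
        proof (rule ccontr)
          assume "x \<notin> N \<union> {0, 1}"
          then show False using x eqF[of x] by (cases "x \<in> {0..1}") (auto simp: indicator_def)
        qed
      qed
    qed
  qed
  ultimately have "(\<lambda>t. indicator {0..1} t * pd f t) \<in> borel_measurable lebesgue"
    by (rule borel_measurable_AE)
  then have "pd f \<in> borel_measurable M01"
    by (subst borel_measurable_restrict_space_iff) auto
  moreover have "0 \<le> pd f t \<and> pd f t \<le> 1" if "t \<in> {0<..<1}" for t
  proof -
    have "pd f t = pd (ext01 f) t" by (rule pd_ext01[OF that])
    moreover have "0 \<le> pd (ext01 f) t \<and> pd (ext01 f) t \<le> 1"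
      by (rule pd_bounds) (auto intro!: always_eventually monolip_quot01[OF f] simp: eventually_at_filter)
    ultimately show ?thesis by simp
  qed
  ultimately show ?thesis unfolding good_def by auto
qed


lemma shift_bound:
  fixes H :: "real \<Rightarrow> real"
  assumes mono: "mono H" and cont: "continuous_on UNIV H"
    and c1: "\<And>t. 1 \<le> t \<Longrightarrow> H t = H 1" and c0: "\<And>t. t \<le> 0 \<Longrightarrow> H t = H 0"
    and d: "0 < d" "d \<le> 1"
  shows "integral\<^sup>L M01 (\<lambda>t. H (t + d) - H t) \<le> d * (H 1 - H 0)"
proof -
  have mono': "\<And>x y. x \<le> y \<Longrightarrow> H x \<le> H y" using mono by (simp add: mono_def)
  have Hb: "H 0 \<le> H t \<and> H t \<le> H 1" for t
  proof -
    have "H 0 \<le> H t"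
      using mono'[of 0 t] c0[of t] mono'[of t 0] by (cases "0 \<le> t") auto
    moreover have "H t \<le> H 1"
      using mono'[of t 1] c1[of t] by (cases "t \<le> 1") auto
    ultimately show ?thesis by simp
  qed
  define B where "B = \<bar>H 0\<bar> + \<bar>H 1\<bar>"
  have B0: "0 \<le> B" unfolding B_def by simp
  have HB: "\<bar>H t\<bar> \<le> B" for t using Hb[of t] unfolding B_def by auto
  have Hm: "H \<in> borel_measurable borel" using cont by (rule borel_measurable_continuous_onI)
  have Hdm: "(\<lambda>x. H (x + d)) \<in> borel_measurable borel"
    by (rule borel_measurable_continuous_onI) (intro continuous_on_compose2[OF cont] continuous_intros, auto)
  have intA: "integrable lborel (\<lambda>x. indicator A x * G x)"
    if A: "A \<in> sets borel" "bounded A" and G: "G \<in> borel_measurable borel" "\<And>x. \<bar>G x\<bar> \<le> B" for A G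
  proof (rule Bochner_Integration.integrable_bound)
    show "integrable lborel (\<lambda>x. indicator A x * B)"
      by (intro integrable_mult_left integrable_real_indicator) (use A emeasure_bounded_finite in auto)
    show "(\<lambda>x. indicator A x * G x) \<in> borel_measurable lborel"
      using G A by (simp add: measurable_lborel2 borel_measurable_times borel_measurable_indicator)
    show "AE x in lborel. norm (indicator A x * G x) \<le> norm (indicator A x * B)"
      using G(2) B0 by (intro AE_I2) (auto simp: indicator_def abs_mult)
  qed
  define I where "I A = integral\<^sup>L lborel (\<lambda>x. indicator A x * H x)" for A
  have iH: "integrable lborel (\<lambda>x. indicator A x * H x)" if "A \<in> sets borel" "bounded A" for A
    using intA[OF that Hm HB] .
  have a: "integral\<^sup>L M01 (\<lambda>t. H (t + d) - H t) = integral\<^sup>L lborel (\<lambda>t. indicator {0..1} t * (H (t + d) - H t))"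
  proof -
    have "integral\<^sup>L M01 (\<lambda>t. H (t + d) - H t) = integral\<^sup>L lebesgue (\<lambda>t. indicator {0..1} t * (H (t + d) - H t))"
      by (subst integral_restrict_space) auto
    also have "\<dots> = integral\<^sup>L lborel (\<lambda>t. indicator {0..1} t * (H (t + d) - H t))"
      by (rule integral_completion) (use Hm Hdm in \<open>simp add: measurable_lborel2\<close>)
    finally show ?thesis .
  qed
  have b: "integral\<^sup>L lborel (\<lambda>t. indicator {0..1} t * (H (t + d) - H t))
      = integral\<^sup>L lborel (\<lambda>t. indicator {0..1} t * H (t + d)) - I {0..1}"
    unfolding I_def
    by (subst Bochner_Integration.integral_diff[symmetric])
       (auto intro!: intA Hdm Hm HB simp: right_diff_distrib)
  have c: "integral\<^sup>L lborel (\<lambda>t. indicator {0..1} t * H (t + d)) = I {d..1 + d}"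
  proof -
    have "I {d..1 + d} = \<bar>1\<bar> *\<^sub>R (LBINT x. indicator {d..1 + d} (d + 1 * x) * H (d + 1 * x))"
      unfolding I_def by (rule lborel_integral_real_affine) simp
    also have "(\<lambda>x. indicator {d..1 + d} (d + 1 * x) * H (d + 1 * x)) = (\<lambda>t. indicator {0..1} t * H (t + d))"
    proof
      fix x :: real
      have "(d + 1 * x \<in> {d..1 + d}) = (x \<in> {0..1})" by auto
      then show "indicator {d..1 + d} (d + 1 * x) * H (d + 1 * x) = indicator {0..1} x * H (x + d)"
        by (simp add: indicator_def add.commute[of d x])
    qed
    finally show ?thesis by simp
  qed
  have d1: "I {d..1 + d} = I {d..1} + I {1<..1 + d}"
  proof -
    have "indicator {d..1 + d} x = indicator {d..1} x + (indicator {1<..1 + d} x :: real)" for x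
      using d by (auto simp: indicator_def)
    then have "I {d..1 + d} = integral\<^sup>L lborel (\<lambda>x. indicator {d..1} x * H x + indicator {1<..1 + d} x * H x)"
      unfolding I_def by (simp add: distrib_right)
    also have "\<dots> = I {d..1} + I {1<..1 + d}"
      unfolding I_def by (rule Bochner_Integration.integral_add) (auto intro!: iH)
    finally show ?thesis .
  qed
  have e: "I {1<..1 + d} = d * H 1"
  proof -
    have "I {1<..1 + d} = integral\<^sup>L lborel (\<lambda>x. indicator {1<..1 + d} x * H 1)"
      unfolding I_def
    proof (rule Bochner_Integration.integral_cong)
      fix x show "indicator {1<..1 + d} x * H x = indicator {1<..1 + d} x * H 1"
        using c1[of x] by (cases "x \<in> {1<..1 + d}") (auto simp: indicator_def)
    qed simp
    also have "\<dots> = measure lborel {1<..1 + d} * H 1" by simp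
    finally show ?thesis using d by simp
  qed
  have f: "I {0..1} = I {0..<d} + I {d..1}"
  proof -
    have "indicator {0..1} x = indicator {0..<d} x + (indicator {d..1} x :: real)" for x
      using d by (auto simp: indicator_def)
    then have "I {0..1} = integral\<^sup>L lborel (\<lambda>x. indicator {0..<d} x * H x + indicator {d..1} x * H x)"
      unfolding I_def by (simp add: distrib_right)
    also have "\<dots> = I {0..<d} + I {d..1}"
      unfolding I_def by (rule Bochner_Integration.integral_add) (auto intro!: iH)
    finally show ?thesis .
  qed
  have g: "d * H 0 \<le> I {0..<d}"
  proof -
    have "d * H 0 = integral\<^sup>L lborel (\<lambda>x. indicator {0..<d} x * H 0)" using d by simp
    also have "\<dots> \<le> I {0..<d}"
      unfolding I_def
    proof (rule integral_mono)
      show "integrable lborel (\<lambda>x. indicator {0..<d} x * H 0)"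
        using d by (intro integrable_mult_left integrable_real_indicator) auto
      show "integrable lborel (\<lambda>x. indicator {0..<d} x * H x)" by (rule iH) auto
    qed (auto simp: indicator_def intro: mono')
    finally show ?thesis .
  qed
  show ?thesis using a b c d1 e f g by (simp add: algebra_simps)
qed

lemma monolip_L1:
  assumes f1: "monolip f1" and f2: "monolip f2" and h: "monolip (\<lambda>t. f2 t - f1 t)"
  shows "integral\<^sup>L M01 (\<lambda>t. \<bar>pd f2 t - pd f1 t\<bar>) \<le> (f2 1 - f1 1) - (f2 0 - f1 0)"
proof -
  obtain N1 where N1: "N1 \<in> null_sets lebesgue" "\<And>t. t \<notin> N1 \<Longrightarrow> ext01 f1 differentiable (at t)"
    using monolip_ae[OF f1] by blast
  obtain N2 where N2: "N2 \<in> null_sets lebesgue" "\<And>t. t \<notin> N2 \<Longrightarrow> ext01 f2 differentiable (at t)"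
    using monolip_ae[OF f2] by blast
  define H where "H = ext01 (\<lambda>t. f2 t - f1 t)"
  have Hext: "H = (\<lambda>t. ext01 f2 t - ext01 f1 t)" unfolding H_def ext01_def by auto
  define q where "q n t = (H (t + 1 / real (Suc n)) - H t) * real (Suc n)" for n t
  have Hcont: "continuous_on UNIV H" unfolding H_def by (rule ext01_cont[OF h])
  have Hmono: "mono H" unfolding H_def by (rule ext01_mono[OF h])
  have qm: "q n \<in> borel_measurable M01" for n
  proof -
    have "continuous_on UNIV (q n)"
      unfolding q_def by (intro continuous_intros continuous_on_compose2[OF Hcont]) auto
    then show ?thesis by (intro borel_M01 borel_measurable_continuous_onI)
  qed
  have q01: "0 \<le> q n t \<and> q n t \<le> 1" for n t
  proof -
    have "0 \<le> (H (t + 1 / real (Suc n)) - H t) / (1 / real (Suc n)) \<and> (H (t + 1 / real (Suc n)) - H t) / (1 / real (Suc n)) \<le> 1"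
      unfolding H_def by (rule monolip_quot01[OF h]) simp
    then show ?thesis unfolding q_def by simp
  qed
  have pdm: "pd f1 \<in> borel_measurable M01" "pd f2 \<in> borel_measurable M01"
    using good_pd_monolip[OF f1] good_pd_monolip[OF f2] by (auto simp: good_def)
  have lim: "(\<lambda>n. q n t) \<longlonglongrightarrow> \<bar>pd f2 t - pd f1 t\<bar>" if t: "t \<in> {0<..<1}" "t \<notin> N1" "t \<notin> N2" for t
  proof -
    have d1: "(ext01 f1 has_real_derivative deriv (ext01 f1) t) (at t)" and d2: "(ext01 f2 has_real_derivative deriv (ext01 f2) t) (at t)"
      using N1(2)[OF t(2)] N2(2)[OF t(3)] by (simp_all add: DERIV_deriv_iff_real_differentiable)
    have dH: "(H has_real_derivative deriv (ext01 f2) t - deriv (ext01 f1) t) (at t)"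
      unfolding Hext by (rule DERIV_diff[OF d2 d1])
    then have Hd: "H differentiable (at t)" unfolding real_differentiable_def by blast
    have eqd: "deriv H t = pd f2 t - pd f1 t"
      using DERIV_imp_deriv[OF dH] pd_ext01[OF t(1), of f1] pd_ext01[OF t(1), of f2] N1(2)[OF t(2)] N2(2)[OF t(3)]
      by (simp add: pd_def)
    have lq: "(\<lambda>n. q n t) \<longlonglongrightarrow> deriv H t" unfolding q_def by (rule deriv_seq[OF Hd])
    have "0 \<le> deriv H t" by (rule tendsto_lowerbound[OF lq]) (use q01 in auto)
    then show ?thesis using lq eqd by simp
  qed
  have ae: "AE t in M01. (\<lambda>n. q n t) \<longlonglongrightarrow> \<bar>pd f2 t - pd f1 t\<bar>"
  proof -
    have "N1 \<union> N2 \<in> null_sets lebesgue" using N1(1) N2(1) by auto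
    then have "(N1 \<union> N2) \<inter> {0..1} \<in> null_sets lebesgue" by (rule null_set_Int2) simp
    then have "(N1 \<union> N2) \<inter> {0..1} \<in> null_sets M01"
      by (subst null_sets_restrict_space) auto
    then have "AE t in M01. t \<notin> N1 \<union> N2"
      by (rule AE_I'[where N="(N1 \<union> N2) \<inter> {0..1}"]) auto
    with AE_M01_interior show ?thesis by eventually_elim (auto intro: lim)
  qed
  have conv: "(\<lambda>n. integral\<^sup>L M01 (q n)) \<longlonglongrightarrow> integral\<^sup>L M01 (\<lambda>t. \<bar>pd f2 t - pd f1 t\<bar>)"
  proof (rule integral_dominated_convergence[where w="\<lambda>t. 1"])
    show "integrable M01 (\<lambda>t. 1::real)"
      by (simp add: finite_measure.emeasure_finite[OF finite_M01])
    show "AE t in M01. norm (q n t) \<le> 1" for n using q01 by (intro AE_I2) auto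
  qed (use ae qm pdm in auto)
  have bnd: "integral\<^sup>L M01 (q n) \<le> H 1 - H 0" for n
  proof -
    have "integral\<^sup>L M01 (q n) = integral\<^sup>L M01 (\<lambda>t. H (t + 1 / real (Suc n)) - H t) * real (Suc n)"
      unfolding q_def by simp
    also have "\<dots> \<le> (1 / real (Suc n) * (H 1 - H 0)) * real (Suc n)"
    proof (rule mult_right_mono)
      show "integral\<^sup>L M01 (\<lambda>t. H (t + 1 / real (Suc n)) - H t) \<le> 1 / real (Suc n) * (H 1 - H 0)"
        by (rule shift_bound[OF Hmono Hcont]) (auto simp: H_def ext01_def max_def min_def)
    qed simp
    also have "\<dots> = H 1 - H 0" by simp
    finally show ?thesis .
  qed
  have "integral\<^sup>L M01 (\<lambda>t. \<bar>pd f2 t - pd f1 t\<bar>) \<le> H 1 - H 0"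
    using LIMSEQ_le_const2[OF conv] bnd by blast
  also have "H 1 - H 0 = (f2 1 - f1 1) - (f2 0 - f1 0)" unfolding H_def ext01_def by simp
  finally show ?thesis .
qed


lemma copula_2inc:
  assumes "copula C" "0 \<le> u1" "u1 \<le> u2" "u2 \<le> 1" "0 \<le> v1" "v1 \<le> v2" "v2 \<le> 1"
  shows "0 \<le> C u2 v2 - C u1 v2 - C u2 v1 + C u1 v1"
  using assms unfolding copula_def by blast

lemma copula_bd:
  assumes "copula C" "u \<in> {0..1}"
  shows "C u 0 = 0" "C 0 u = 0" "C u 1 = u" "C 1 u = u"
  using assms unfolding copula_def by auto

lemma copula_monolip:
  assumes C: "copula C" and u: "u \<in> {0..1}"
  shows "monolip (\<lambda>t. C u t)"
  unfolding monolip_def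
proof (intro allI impI conjI)
  fix x y :: real assume xy: "0 \<le> x" "x \<le> y" "y \<le> 1"
  have "0 \<le> C u y - C 0 y - C u x + C 0 x" using copula_2inc[OF C, of 0 u x y] u xy by auto
  then show "C u x \<le> C u y" using copula_bd(2)[OF C, of x] copula_bd(2)[OF C, of y] xy by auto
  have "0 \<le> C 1 y - C u y - C 1 x + C u x" using copula_2inc[OF C, of u 1 x y] u xy by auto
  then show "C u y - C u x \<le> y - x" using copula_bd(4)[OF C, of x] copula_bd(4)[OF C, of y] xy by auto
qed

lemma copula_monolip_diff:
  assumes C: "copula C" and u: "0 \<le> u" "u \<le> u'" "u' \<le> 1"
  shows "monolip (\<lambda>t. C u' t - C u t)"
  unfolding monolip_def
proof (intro allI impI conjI)
  fix x y :: real assume xy: "0 \<le> x" "x \<le> y" "y \<le> 1"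
  have "0 \<le> C u' y - C u y - C u' x + C u x" using copula_2inc[OF C, of u u' x y] u xy by auto
  then show "C u' x - C u x \<le> C u' y - C u y" by simp
  have "C u x \<le> C u y" "C u' y - C u' x \<le> y - x"
    using copula_monolip[OF C, of u] copula_monolip[OF C, of u'] u xy unfolding monolip_def by auto
  then show "C u' y - C u y - (C u' x - C u x) \<le> y - x" by simp
qed

lemma copula_good: "copula C \<Longrightarrow> u \<in> {0..1} \<Longrightarrow> good (partial2 C u)"
  unfolding partial2_pd by (rule good_pd_monolip[OF copula_monolip])

lemma copula_L1:
  assumes C: "copula C" and u: "u \<in> {0..1}" "u' \<in> {0..1}"
  shows "integral\<^sup>L M01 (\<lambda>t. \<bar>partial2 C u t - partial2 C u' t\<bar>) \<le> \<bar>u - u'\<bar>"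
proof -
  have main: "integral\<^sup>L M01 (\<lambda>t. \<bar>partial2 C b t - partial2 C a t\<bar>) \<le> b - a"
    if ab: "0 \<le> a" "a \<le> b" "b \<le> 1" for a b
  proof -
    have "integral\<^sup>L M01 (\<lambda>t. \<bar>pd (\<lambda>t. C b t) t - pd (\<lambda>t. C a t) t\<bar>) \<le> (C b 1 - C a 1) - (C b 0 - C a 0)"
      using ab by (intro monolip_L1 copula_monolip[OF C] copula_monolip_diff[OF C]) auto
    also have "\<dots> = b - a" using copula_bd[OF C, of a] copula_bd[OF C, of b] ab by simp
    finally show ?thesis unfolding partial2_pd .
  qed
  show ?thesis
  proof (cases "u \<le> u'")
    case True
    have "integral\<^sup>L M01 (\<lambda>t. \<bar>partial2 C u t - partial2 C u' t\<bar>) = integral\<^sup>L M01 (\<lambda>t. \<bar>partial2 C u' t - partial2 C u t\<bar>)"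
      by (simp add: abs_minus_commute)
    also have "\<dots> \<le> u' - u" using main[of u u'] True u by auto
    finally show ?thesis using True by simp
  next
    case False
    then show ?thesis using main[of u' u] u by auto
  qed
qed

lemma partial2_Pi: "partial2 Pi_cop s t = s"
proof -
  have "((\<lambda>t. Pi_cop s t) has_real_derivative s) (at t)"
    unfolding Pi_cop_def by (auto intro!: derivative_eq_intros)
  then show ?thesis unfolding partial2_def
    by (metis DERIV_imp_deriv real_differentiable_def)
qed

lemma T_op_Phi: "T_op C u = Phi (partial2 C u)"
proof
  fix v
  show "T_op C u v = Phi (partial2 C u) v"
    unfolding T_op_def join_op_def partial2_Pi Phi_def by (rule LINT_M01)
qed

lemma partial2_T_op: "partial2 (T_op C) u = pd (Phi (partial2 C u))"
  unfolding partial2_pd T_op_Phi by simp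

lemma sandwich0:
  fixes a b :: "nat \<Rightarrow> real"
  assumes "\<And>n. 0 \<le> a n" "\<And>n. a n \<le> b n" "b \<longlonglongrightarrow> 0"
  shows "a \<longlonglongrightarrow> 0"
  by (rule real_tendsto_sandwich[of "\<lambda>n. 0" a _ b]) (use assms in auto)

lemma unif_from_pw:
  fixes F :: "nat \<Rightarrow> real \<Rightarrow> real \<Rightarrow> real" and G :: "real \<Rightarrow> real \<Rightarrow> real" and e :: "nat \<Rightarrow> real \<Rightarrow> real"
  assumes lipF: "\<And>n u u' v. u \<in> {0..1} \<Longrightarrow> u' \<in> {0..1} \<Longrightarrow> v \<in> {0..1} \<Longrightarrow> \<bar>F n u v - F n u' v\<bar> \<le> \<bar>u - u'\<bar>"
    and lipG: "\<And>u u' v. u \<in> {0..1} \<Longrightarrow> u' \<in> {0..1} \<Longrightarrow> v \<in> {0..1} \<Longrightarrow> \<bar>G u v - G u' v\<bar> \<le> \<bar>u - u'\<bar>"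
    and bnd: "\<And>n u v. u \<in> {0..1} \<Longrightarrow> v \<in> {0..1} \<Longrightarrow> \<bar>F n u v - G u v\<bar> \<le> e n u"
    and conv: "\<And>u. u \<in> {0..1} \<Longrightarrow> (\<lambda>n. e n u) \<longlonglongrightarrow> 0"
  shows "uniform_limit ({0..1} \<times> {0..1}) (\<lambda>n (u, v). F n u v) (\<lambda>(u, v). G u v) sequentially"
  unfolding uniform_limit_iff
proof (intro allI impI)
  fix \<epsilon> :: real assume "\<epsilon> > 0"
  define K :: nat where "K = nat \<lceil>3 / \<epsilon>\<rceil> + 1"
  have K0: "real K > 0" unfolding K_def by simp
  have K3: "3 / \<epsilon> < real K" unfolding K_def by linarith
  then have Ke: "1 / real K < \<epsilon> / 3" using \<open>\<epsilon> > 0\<close> K0 by (simp add: field_simps)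
  have grid: "real k / real K \<in> {0..1}" if "k \<le> K" for k using that K0 by (auto simp: field_simps)
  have "\<forall>\<^sub>F n in sequentially. \<forall>k\<in>{..K}. e n (real k / real K) < \<epsilon> / 3"
  proof (rule eventually_ball_finite)
    show "\<forall>k\<in>{..K}. \<forall>\<^sub>F n in sequentially. e n (real k / real K) < \<epsilon> / 3"
    proof
      fix k assume "k \<in> {..K}"
      then have "(\<lambda>n. e n (real k / real K)) \<longlonglongrightarrow> 0" using conv grid by auto
      moreover have "(0::real) < \<epsilon> / 3" using \<open>\<epsilon> > 0\<close> by simp
      ultimately show "\<forall>\<^sub>F n in sequentially. e n (real k / real K) < \<epsilon> / 3" by (rule order_tendstoD)
    qed
  qed simp
  then show "\<forall>\<^sub>F n in sequentially. \<forall>x\<in>{0..1} \<times> {0..1}. dist ((\<lambda>(u, v). F n u v) x) ((\<lambda>(u, v). G u v) x) < \<epsilon>"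
  proof eventually_elim
    case (elim n)
    show ?case
    proof (clarsimp simp: dist_real_def)
      fix u v :: real assume uv: "0 \<le> u" "u \<le> 1" "0 \<le> v" "v \<le> 1"
      define k where "k = nat \<lfloor>u * real K\<rfloor>"
      have k1: "real k \<le> u * real K" unfolding k_def using uv K0 by (simp add: of_nat_nat)
      have k2: "u * real K < real k + 1" unfolding k_def using uv K0 by (simp add: of_nat_nat)
      have "u * real K \<le> 1 * real K" using uv K0 by (intro mult_right_mono) auto
      then have "real k \<le> real K" using k1 by linarith
      then have kK: "k \<le> K" by simp
      define uk where "uk = real k / real K"
      have uk: "uk \<in> {0..1}" unfolding uk_def using grid[OF kK] .
      have e1: "0 \<le> u * real K - real k" "u * real K - real k \<le> 1" using k1 k2 by linarith+
      have eq: "u - uk = (u * real K - real k) / real K" unfolding uk_def using K0 by (simp add: field_simps)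
      have "0 \<le> u - uk" using eq e1 K0 by simp
      moreover have "u - uk \<le> 1 / real K" unfolding eq using e1 K0 by (simp add: divide_right_mono)
      ultimately have "\<bar>u - uk\<bar> \<le> 1 / real K" by simp
      then have d: "\<bar>u - uk\<bar> < \<epsilon> / 3" using Ke by linarith
      have "\<bar>F n u v - G u v\<bar> \<le> \<bar>F n u v - F n uk v\<bar> + \<bar>F n uk v - G uk v\<bar> + \<bar>G uk v - G u v\<bar>" by linarith
      also have "\<dots> < \<epsilon> / 3 + \<epsilon> / 3 + \<epsilon> / 3"
      proof -
        have "\<bar>F n u v - F n uk v\<bar> \<le> \<bar>u - uk\<bar>" using lipF[of u uk v n] uv uk by auto
        moreover have "\<bar>G uk v - G u v\<bar> \<le> \<bar>u - uk\<bar>" using lipG[of uk u v] uv uk by (auto simp: abs_minus_commute)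
        moreover have "\<bar>F n uk v - G uk v\<bar> < \<epsilon> / 3"
        proof -
          have "\<bar>F n uk v - G uk v\<bar> \<le> e n uk" using bnd[of uk v n] uv uk by auto
          moreover have "e n uk < \<epsilon> / 3" using elim kK unfolding uk_def by auto
          ultimately show ?thesis by linarith
        qed
        ultimately show ?thesis using d by linarith
      qed
      finally show "\<bar>F n u v - G u v\<bar> < \<epsilon>" by simp
    qed
  qed
qed


lemma intabs_nonneg: "0 \<le> integral\<^sup>L M01 (\<lambda>t. \<bar>f t - g t :: real\<bar>)"
  by (rule integral_nonneg_AE) auto

lemma L_GG:
  assumes A: "\<And>n. good (A n)" and B: "good B"
    and c: "(\<lambda>n. integral\<^sup>L M01 (\<lambda>t. \<bar>A n t - B t\<bar>)) \<longlonglongrightarrow> 0"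
  shows "(\<lambda>n. integral\<^sup>L M01 (\<lambda>t. \<bar>Gf (A n) t - Gf B t\<bar>)) \<longlonglongrightarrow> 0"
  by (rule sandwich0[OF intabs_nonneg Gf_contract[OF A B] c])

lemma L_inv:
  assumes A: "\<And>n. good (A n)" and B: "good B"
    and c: "(\<lambda>n. integral\<^sup>L M01 (\<lambda>t. \<bar>Gf (Gf (A n)) t - Gf (Gf B) t\<bar>)) \<longlonglongrightarrow> 0"
  shows "(\<lambda>n. integral\<^sup>L M01 (\<lambda>t. \<bar>Gf (A n) t - Gf B t\<bar>)) \<longlonglongrightarrow> 0"
proof (rule sandwich0[OF intabs_nonneg _ c])
  fix n
  have gA: "good (Gf (Gf (A n)))" "good (Gf (Gf B))"
    using good_Gf good_meas A B by blast+
  have "integral\<^sup>L M01 (\<lambda>t. \<bar>Gf (A n) t - Gf B t\<bar>) = integral\<^sup>L M01 (\<lambda>t. \<bar>Gf (Gf (Gf (A n))) t - Gf (Gf (Gf B)) t\<bar>)"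
  proof (rule integral_cong_AE)
    show "(\<lambda>t. \<bar>Gf (A n) t - Gf B t\<bar>) \<in> borel_measurable M01"
      using Gf_meas[OF good_meas[OF A[of n]]] Gf_meas[OF good_meas[OF B]] by measurable
    show "(\<lambda>t. \<bar>Gf (Gf (Gf (A n))) t - Gf (Gf (Gf B)) t\<bar>) \<in> borel_measurable M01"
      using Gf_meas[OF good_meas[OF gA(1)]] Gf_meas[OF good_meas[OF gA(2)]] by measurable
    show "AE t in M01. \<bar>Gf (A n) t - Gf B t\<bar> = \<bar>Gf (Gf (Gf (A n))) t - Gf (Gf (Gf B)) t\<bar>"
      using Gf3_AE[OF good_meas[OF A[of n]]] Gf3_AE[OF good_meas[OF B]] by eventually_elim simp
  qed
  also have "\<dots> \<le> integral\<^sup>L M01 (\<lambda>t. \<bar>Gf (Gf (A n)) t - Gf (Gf B) t\<bar>)"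
    by (rule Gf_contract[OF gA])
  finally show "integral\<^sup>L M01 (\<lambda>t. \<bar>Gf (A n) t - Gf B t\<bar>) \<le> integral\<^sup>L M01 (\<lambda>t. \<bar>Gf (Gf (A n)) t - Gf (Gf B) t\<bar>)" .
qed

lemma L_M:
  assumes A: "\<And>n. good (A n)" and B: "good B"
    and c: "\<And>v. v \<in> {0..1} \<Longrightarrow> (\<lambda>n. Phi (A n) v) \<longlonglongrightarrow> Phi B v"
  shows "(\<lambda>n. integral\<^sup>L M01 (\<lambda>t. \<bar>Gf (A n) t - Gf B t\<bar>)) \<longlonglongrightarrow> 0"
proof (rule mono_L1_conv)
  show "\<And>n x y. x \<le> y \<Longrightarrow> Gf (A n) y \<le> Gf (A n) x" by (rule Gf_antimono[OF good_meas[OF A]])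
  show "\<And>x y. x \<le> y \<Longrightarrow> Gf B y \<le> Gf B x" by (rule Gf_antimono[OF good_meas[OF B]])
  show "\<And>n t. 0 \<le> Gf (A n) t \<and> Gf (A n) t \<le> 1" "\<And>t. 0 \<le> Gf B t \<and> Gf B t \<le> 1" by (rule Gf_bounds)+
  fix v :: real assume v: "0 \<le> v" "v \<le> 1"
  show "(\<lambda>n. Iv (Gf (A n)) v) \<longlonglongrightarrow> Iv (Gf B) v"
    using c[of v] v unfolding Iv_def Phi_LC[OF A v] Phi_LC[OF B v] by simp
qed

lemma int_pdPhi:
  assumes A: "good A" and B: "good B"
  shows "integral\<^sup>L M01 (\<lambda>t. \<bar>pd (Phi A) t - pd (Phi B) t\<bar>) = integral\<^sup>L M01 (\<lambda>t. \<bar>Gf A t - Gf B t\<bar>)"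
proof (rule integral_cong_AE)
  show "(\<lambda>t. \<bar>pd (Phi A) t - pd (Phi B) t\<bar>) \<in> borel_measurable M01"
    using good_meas[OF good_pd_Phi[OF A]] good_meas[OF good_pd_Phi[OF B]] by measurable
  show "(\<lambda>t. \<bar>Gf A t - Gf B t\<bar>) \<in> borel_measurable M01"
    using Gf_meas[OF good_meas[OF A]] Gf_meas[OF good_meas[OF B]] by measurable
  show "AE t in M01. \<bar>pd (Phi A) t - pd (Phi B) t\<bar> = \<bar>Gf A t - Gf B t\<bar>"
    using pd_Phi_AE[OF A] pd_Phi_AE[OF B] by eventually_elim simp
qed

lemma Gf_pdPhi: "good A \<Longrightarrow> Gf (pd (Phi A)) = Gf (Gf A)"
  by (rule Gf_AE_cong) (auto intro: good_meas good_pd_Phi Gf_meas pd_Phi_AE)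

lemma Phi_pdPhi: "good A \<Longrightarrow> Phi (pd (Phi A)) = Phi (Gf A)"
  by (rule Phi_AE_cong) (auto intro: good_pd_Phi good_Gf good_meas pd_Phi_AE)


lemma partial2_conv_M01:
  "partial2_conv Ds D \<longleftrightarrow> (\<forall>u\<in>{0..1}. (\<lambda>n. integral\<^sup>L M01 (\<lambda>t. \<bar>partial2 (Ds n) u t - partial2 D u t\<bar>)) \<longlonglongrightarrow> 0)"
  unfolding partial2_conv_def LINT_M01 ..

theorem mainTheorem18:
  fixes Ds :: "nat \<Rightarrow> real \<Rightarrow> real \<Rightarrow> real" and D :: "real \<Rightarrow> real \<Rightarrow> real"
  assumes "\<And>n. copula (Ds n)" and "copula D"
  shows "(partial2_conv Ds D \<longrightarrow> partial2_conv (\<lambda>n. T_op (Ds n)) (T_op D))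
    \<and> (partial2_conv (\<lambda>n. T_op (Ds n)) (T_op D) \<longleftrightarrow> unif_conv_sq (\<lambda>n. T_op (Ds n)) (T_op D))
    \<and> (partial2_conv (\<lambda>n. T_op (Ds n)) (T_op D) \<longleftrightarrow>
         partial2_conv (\<lambda>n. T_op (T_op (Ds n))) (T_op (T_op D)))
    \<and> (partial2_conv (\<lambda>n. T_op (Ds n)) (T_op D) \<longleftrightarrow>
         unif_conv_sq (\<lambda>n. T_op (T_op (Ds n))) (T_op (T_op D)))"
proof -
  note Cn = assms(1) and C = assms(2)
  define X where "X n u = partial2 (Ds n) u" for n u
  define Y where "Y u = partial2 D u" for u
  have gX: "good (X n u)" if "u \<in> {0..1}" for n u unfolding X_def by (rule copula_good[OF Cn that])
  have gY: "good (Y u)" if "u \<in> {0..1}" for u unfolding Y_def by (rule copula_good[OF C that])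
  have gGX: "good (Gf (X n u))" if "u \<in> {0..1}" for n u using good_Gf good_meas gX that by blast
  have gGY: "good (Gf (Y u))" if "u \<in> {0..1}" for u using good_Gf good_meas gY that by blast
  have P1: "partial2_conv Ds D \<longleftrightarrow> (\<forall>u\<in>{0..1}. (\<lambda>n. integral\<^sup>L M01 (\<lambda>t. \<bar>X n u t - Y u t\<bar>)) \<longlonglongrightarrow> 0)"
    unfolding partial2_conv_M01 X_def Y_def ..
  have P2: "partial2_conv (\<lambda>n. T_op (Ds n)) (T_op D) \<longleftrightarrow>
      (\<forall>u\<in>{0..1}. (\<lambda>n. integral\<^sup>L M01 (\<lambda>t. \<bar>Gf (X n u) t - Gf (Y u) t\<bar>)) \<longlonglongrightarrow> 0)"
  proof -
    have "integral\<^sup>L M01 (\<lambda>t. \<bar>partial2 (T_op (Ds n)) u t - partial2 (T_op D) u t\<bar>)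
        = integral\<^sup>L M01 (\<lambda>t. \<bar>Gf (X n u) t - Gf (Y u) t\<bar>)" if u: "u \<in> {0..1}" for n u
      unfolding partial2_T_op using int_pdPhi[OF gX[OF u] gY[OF u]] unfolding X_def Y_def .
    note eq = this
    show ?thesis unfolding partial2_conv_M01
      by (rule ball_cong[OF refl]) (use eq in simp)
  qed
  have P4: "partial2_conv (\<lambda>n. T_op (T_op (Ds n))) (T_op (T_op D)) \<longleftrightarrow>
      (\<forall>u\<in>{0..1}. (\<lambda>n. integral\<^sup>L M01 (\<lambda>t. \<bar>Gf (Gf (X n u)) t - Gf (Gf (Y u)) t\<bar>)) \<longlonglongrightarrow> 0)"
  proof -
    have "integral\<^sup>L M01 (\<lambda>t. \<bar>partial2 (T_op (T_op (Ds n))) u t - partial2 (T_op (T_op D)) u t\<bar>)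
        = integral\<^sup>L M01 (\<lambda>t. \<bar>Gf (Gf (X n u)) t - Gf (Gf (Y u)) t\<bar>)" if u: "u \<in> {0..1}" for n u
    proof -
      have "partial2 (T_op (T_op (Ds n))) u = pd (Phi (pd (Phi (X n u))))"
        unfolding partial2_T_op X_def ..
      moreover have "partial2 (T_op (T_op D)) u = pd (Phi (pd (Phi (Y u))))"
        unfolding partial2_T_op Y_def ..
      ultimately show ?thesis
        using int_pdPhi[OF good_pd_Phi[OF gX[OF u]] good_pd_Phi[OF gY[OF u]]]
          Gf_pdPhi[OF gX[OF u]] Gf_pdPhi[OF gY[OF u]] by simp
    qed
    note eq = this
    show ?thesis unfolding partial2_conv_M01
      by (rule ball_cong[OF refl]) (use eq in simp)
  qed
  have T1: "T_op (Ds n) u v = Phi (X n u) v" "T_op D u v = Phi (Y u) v" for n u v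
    unfolding X_def Y_def T_op_Phi by simp_all
  have T2: "T_op (T_op (Ds n)) u v = Phi (Gf (X n u)) v" "T_op (T_op D) u v = Phi (Gf (Y u)) v"
    if u: "u \<in> {0..1}" for n u v
    using Phi_pdPhi[OF gX[OF u]] Phi_pdPhi[OF gY[OF u]]
    unfolding T_op_Phi[of "T_op _"] partial2_T_op X_def Y_def T_op_Phi by simp_all
  have P3: "unif_conv_sq (\<lambda>n. T_op (Ds n)) (T_op D) \<longleftrightarrow>
      uniform_limit ({0..1} \<times> {0..1}) (\<lambda>n (u, v). Phi (X n u) v) (\<lambda>(u, v). Phi (Y u) v) sequentially"
    unfolding unif_conv_sq_def T1 ..
  have P5: "unif_conv_sq (\<lambda>n. T_op (T_op (Ds n))) (T_op (T_op D)) \<longleftrightarrow>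
      uniform_limit ({0..1} \<times> {0..1}) (\<lambda>n (u, v). Phi (Gf (X n u)) v) (\<lambda>(u, v). Phi (Gf (Y u)) v) sequentially"
  proof -
    have eqP: "(\<forall>x\<in>{0..1}\<times>{0..1}. dist ((\<lambda>(u, v). T_op (T_op (Ds n)) u v) x) ((\<lambda>(u, v). T_op (T_op D) u v) x) < e)
      \<longleftrightarrow> (\<forall>x\<in>{0..1}\<times>{0..1}. dist ((\<lambda>(u, v). Phi (Gf (X n u)) v) x) ((\<lambda>(u, v). Phi (Gf (Y u)) v) x) < e)" for n e
    proof (rule ball_cong[OF refl])
      fix x :: "real \<times> real" assume "x \<in> {0..1}\<times>{0..1}"
      then obtain u v where "x = (u, v)" "u \<in> {0..1}" by auto
      then show "dist ((\<lambda>(u, v). T_op (T_op (Ds n)) u v) x) ((\<lambda>(u, v). T_op (T_op D) u v) x) < e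
        \<longleftrightarrow> dist ((\<lambda>(u, v). Phi (Gf (X n u)) v) x) ((\<lambda>(u, v). Phi (Gf (Y u)) v) x) < e"
        using T2 by simp
    qed
    show ?thesis unfolding unif_conv_sq_def uniform_limit_iff eqP ..
  qed
  have lipX: "\<bar>Phi (X n u) v - Phi (X n u') v\<bar> \<le> \<bar>u - u'\<bar>" if "u \<in> {0..1}" "u' \<in> {0..1}" for n u u' v
  proof -
    have "\<bar>Phi (X n u) v - Phi (X n u') v\<bar> \<le> integral\<^sup>L M01 (\<lambda>s. \<bar>X n u s - X n u' s\<bar>)"
      by (rule Phi_lip_L1[OF gX[OF that(1)] gX[OF that(2)]])
    also have "\<dots> \<le> \<bar>u - u'\<bar>" unfolding X_def by (rule copula_L1[OF Cn[of n] that])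
    finally show ?thesis .
  qed
  have lipY: "\<bar>Phi (Y u) v - Phi (Y u') v\<bar> \<le> \<bar>u - u'\<bar>" if "u \<in> {0..1}" "u' \<in> {0..1}" for u u' v
  proof -
    have "\<bar>Phi (Y u) v - Phi (Y u') v\<bar> \<le> integral\<^sup>L M01 (\<lambda>s. \<bar>Y u s - Y u' s\<bar>)"
      by (rule Phi_lip_L1[OF gY[OF that(1)] gY[OF that(2)]])
    also have "\<dots> \<le> \<bar>u - u'\<bar>" unfolding Y_def by (rule copula_L1[OF C that])
    finally show ?thesis .
  qed
  have lipGX: "\<bar>Phi (Gf (X n u)) v - Phi (Gf (X n u')) v\<bar> \<le> \<bar>u - u'\<bar>" if "u \<in> {0..1}" "u' \<in> {0..1}" for n u u' v
  proof -
    have "\<bar>Phi (Gf (X n u)) v - Phi (Gf (X n u')) v\<bar> \<le> integral\<^sup>L M01 (\<lambda>s. \<bar>Gf (X n u) s - Gf (X n u') s\<bar>)"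
      by (rule Phi_lip_L1[OF gGX[OF that(1)] gGX[OF that(2)]])
    also have "\<dots> \<le> integral\<^sup>L M01 (\<lambda>s. \<bar>X n u s - X n u' s\<bar>)"
      by (rule Gf_contract[OF gX[OF that(1)] gX[OF that(2)]])
    also have "\<dots> \<le> \<bar>u - u'\<bar>" unfolding X_def by (rule copula_L1[OF Cn[of n] that])
    finally show ?thesis .
  qed
  have lipGY: "\<bar>Phi (Gf (Y u)) v - Phi (Gf (Y u')) v\<bar> \<le> \<bar>u - u'\<bar>" if "u \<in> {0..1}" "u' \<in> {0..1}" for u u' v
  proof -
    have "\<bar>Phi (Gf (Y u)) v - Phi (Gf (Y u')) v\<bar> \<le> integral\<^sup>L M01 (\<lambda>s. \<bar>Gf (Y u) s - Gf (Y u') s\<bar>)"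
      by (rule Phi_lip_L1[OF gGY[OF that(1)] gGY[OF that(2)]])
    also have "\<dots> \<le> integral\<^sup>L M01 (\<lambda>s. \<bar>Y u s - Y u' s\<bar>)"
      by (rule Gf_contract[OF gY[OF that(1)] gY[OF that(2)]])
    also have "\<dots> \<le> \<bar>u - u'\<bar>" unfolding Y_def by (rule copula_L1[OF C that])
    finally show ?thesis .
  qed
  have i_ii: "partial2_conv Ds D \<Longrightarrow> partial2_conv (\<lambda>n. T_op (Ds n)) (T_op D)"
    unfolding P1 P2
  proof (intro ballI)
    fix u :: real assume h: "\<forall>u\<in>{0..1}. (\<lambda>n. integral\<^sup>L M01 (\<lambda>t. \<bar>X n u t - Y u t\<bar>)) \<longlonglongrightarrow> 0" and u: "u \<in> {0..1}"
    show "(\<lambda>n. integral\<^sup>L M01 (\<lambda>t. \<bar>Gf (X n u) t - Gf (Y u) t\<bar>)) \<longlonglongrightarrow> 0"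
      by (rule L_GG[of "\<lambda>n. X n u" "Y u"]) (use gX[OF u] gY[OF u] h u in auto)
  qed
  have ii_iv: "partial2_conv (\<lambda>n. T_op (Ds n)) (T_op D) \<Longrightarrow> partial2_conv (\<lambda>n. T_op (T_op (Ds n))) (T_op (T_op D))"
    unfolding P2 P4
  proof (intro ballI)
    fix u :: real assume h: "\<forall>u\<in>{0..1}. (\<lambda>n. integral\<^sup>L M01 (\<lambda>t. \<bar>Gf (X n u) t - Gf (Y u) t\<bar>)) \<longlonglongrightarrow> 0" and u: "u \<in> {0..1}"
    show "(\<lambda>n. integral\<^sup>L M01 (\<lambda>t. \<bar>Gf (Gf (X n u)) t - Gf (Gf (Y u)) t\<bar>)) \<longlonglongrightarrow> 0"
      by (rule L_GG[of "\<lambda>n. Gf (X n u)" "Gf (Y u)"]) (use gGX[OF u] gGY[OF u] h u in auto)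
  qed
  have iv_ii: "partial2_conv (\<lambda>n. T_op (T_op (Ds n))) (T_op (T_op D)) \<Longrightarrow> partial2_conv (\<lambda>n. T_op (Ds n)) (T_op D)"
    unfolding P2 P4
  proof (intro ballI)
    fix u :: real assume h: "\<forall>u\<in>{0..1}. (\<lambda>n. integral\<^sup>L M01 (\<lambda>t. \<bar>Gf (Gf (X n u)) t - Gf (Gf (Y u)) t\<bar>)) \<longlonglongrightarrow> 0" and u: "u \<in> {0..1}"
    show "(\<lambda>n. integral\<^sup>L M01 (\<lambda>t. \<bar>Gf (X n u) t - Gf (Y u) t\<bar>)) \<longlonglongrightarrow> 0"
      by (rule L_inv[of "\<lambda>n. X n u" "Y u"]) (use gX[OF u] gY[OF u] h u in auto)
  qed
  have ii_iii: "partial2_conv (\<lambda>n. T_op (Ds n)) (T_op D) \<Longrightarrow> unif_conv_sq (\<lambda>n. T_op (Ds n)) (T_op D)"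
    unfolding P2 P3
  proof (rule unif_from_pw[where e="\<lambda>n u. integral\<^sup>L M01 (\<lambda>t. \<bar>Gf (X n u) t - Gf (Y u) t\<bar>)"])
    show "\<bar>Phi (X n u) v - Phi (Y u) v\<bar> \<le> integral\<^sup>L M01 (\<lambda>t. \<bar>Gf (X n u) t - Gf (Y u) t\<bar>)"
      if "u \<in> {0..1}" "v \<in> {0..1}" for n u v
      using Phi_lip_Gf[OF gX[OF that(1)] gY[OF that(1)], of v] that by auto
  qed (use lipX lipY in auto)
  have iv_v: "partial2_conv (\<lambda>n. T_op (T_op (Ds n))) (T_op (T_op D)) \<Longrightarrow> unif_conv_sq (\<lambda>n. T_op (T_op (Ds n))) (T_op (T_op D))"
    unfolding P4 P5
  proof (rule unif_from_pw[where e="\<lambda>n u. integral\<^sup>L M01 (\<lambda>t. \<bar>Gf (Gf (X n u)) t - Gf (Gf (Y u)) t\<bar>)"])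
    show "\<bar>Phi (Gf (X n u)) v - Phi (Gf (Y u)) v\<bar> \<le> integral\<^sup>L M01 (\<lambda>t. \<bar>Gf (Gf (X n u)) t - Gf (Gf (Y u)) t\<bar>)"
      if "u \<in> {0..1}" "v \<in> {0..1}" for n u v
      using Phi_lip_Gf[OF gGX[OF that(1)] gGY[OF that(1)], of v] that by auto
  qed (use lipGX lipGY in auto)
  have iii_ii: "unif_conv_sq (\<lambda>n. T_op (Ds n)) (T_op D) \<Longrightarrow> partial2_conv (\<lambda>n. T_op (Ds n)) (T_op D)"
    unfolding P2 P3
  proof (intro ballI)
    fix u :: real assume U: "uniform_limit ({0..1} \<times> {0..1}) (\<lambda>n (u, v). Phi (X n u) v) (\<lambda>(u, v). Phi (Y u) v) sequentially"
      and u: "u \<in> {0..1}"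
    show "(\<lambda>n. integral\<^sup>L M01 (\<lambda>t. \<bar>Gf (X n u) t - Gf (Y u) t\<bar>)) \<longlonglongrightarrow> 0"
    proof (rule L_M[OF gX[OF u] gY[OF u]])
      fix v :: real assume "v \<in> {0..1}"
      then have "(u, v) \<in> {0..1} \<times> {0..1}" using u by auto
      from tendsto_uniform_limitI[OF U this] show "(\<lambda>n. Phi (X n u) v) \<longlonglongrightarrow> Phi (Y u) v" by simp
    qed
  qed
  have v_iv: "unif_conv_sq (\<lambda>n. T_op (T_op (Ds n))) (T_op (T_op D)) \<Longrightarrow> partial2_conv (\<lambda>n. T_op (T_op (Ds n))) (T_op (T_op D))"
    unfolding P4 P5
  proof (intro ballI)
    fix u :: real assume U: "uniform_limit ({0..1} \<times> {0..1}) (\<lambda>n (u, v). Phi (Gf (X n u)) v) (\<lambda>(u, v). Phi (Gf (Y u)) v) sequentially"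
      and u: "u \<in> {0..1}"
    show "(\<lambda>n. integral\<^sup>L M01 (\<lambda>t. \<bar>Gf (Gf (X n u)) t - Gf (Gf (Y u)) t\<bar>)) \<longlonglongrightarrow> 0"
    proof (rule L_M[OF gGX[OF u] gGY[OF u]])
      fix v :: real assume "v \<in> {0..1}"
      then have "(u, v) \<in> {0..1} \<times> {0..1}" using u by auto
      from tendsto_uniform_limitI[OF U this] show "(\<lambda>n. Phi (Gf (X n u)) v) \<longlonglongrightarrow> Phi (Gf (Y u)) v" by simp
    qed
  qed
  show ?thesis using i_ii ii_iv iv_ii ii_iii iii_ii iv_v v_iv by blast
qed

end
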